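(* Let $\mathfrak F$ be a Frankenstein graph with partition $\{\mathsf G_1,\dots,\mathsf G_m\}$. Then there exists a permutation $\sigma$ of $\{1,\dots,m\}$ such that, writing $\mathfrak F_i=\mathsf G_{\sigma(1)}\cup\dots\cup\mathsf G_{\sigma(i)}$, we have $|V(\mathfrak F_i)\cap V(\mathsf G_{\sigma(i+1)})|\le 1$ for every $i\in\{1,\dots,m-1\}$.
   Context: A (colored) graph is a finite set $\mathsf G$ of pairs $(e,\alpha)$, where the $e$'s are pairwise distinct 2-element subsets of a vertex set and $\alpha$ is a color (colors may repeat). $V(\mathsf G)$ is its vertex set and $\chi(\mathsf G)$ its set of colors; $\mathsf G$ is rainbow if $|\chi(\mathsf G)|=|\mathsf G|$ and almost rainbow if $|\chi(\mathsf G)|=|\mathsf G|-1$. A subgraph is a subset. Paths, cycles, trees are colored graphs whose underlying uncolored edges form a path (two distinct terminals), cycle, or tree; lengths count edges. A long rainbow odd cycle is a rainbow cycle of odd length at least $7$. A theta graph is a union $\mathsf P_1\cup\mathsf P_2\cup\mathsf P_3$ of three paths with the same terminals $s\neq t$ such that any two share no vertex other than $s,t$ and no underlying uncolored edge. A bad piece is an almost rainbow theta graph with at least $6$ vertices that is the union of three rainbow paths as in the definition of a theta graph. A partition of a graph $\mathsf G$ is a collection $\{\mathsf G_1,\dots,\mathsf G_m\}$ of graphs with $\mathsf G=\bigcup_i\mathsf G_i$ and, for $i\ne j$, $|V(\mathsf G_i)\cap V(\mathsf G_j)|\le 1$ and $\chi(\mathsf G_i)\cap\chi(\mathsf G_j)=\emptyset$;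 its members are called parts. A Frankenstein graph is a graph $\mathfrak F$ together with a partition $\{\mathsf C_1,\dots,\mathsf C_c,\mathsf B_1,\dots,\mathsf B_b,\mathsf T_1,\dots,\mathsf T_t\}$ ($c,b,t\ge0$, $c+b+t\ge1$) in which the $\mathsf C_i$ are long rainbow odd cycles, the $\mathsf B_i$ are bad pieces and the $\mathsf T_i$ are rainbow trees, such that (F1) $V(\mathsf T_p)\cap V(\mathsf T_q)=\emptyset$ for $p\neq q$, and (F2) no subgraph of $\mathfrak F$ is a rainbow even cycle. *)

theory Defs
  imports Main
begin

type_synonym ('v, 'c) cgraph = "('v set \<times> 'c) set"

definition cgraph :: "('v, 'c) cgraph \<Rightarrow> bool" where
  "cgraph G \<longleftrightarrow> finite G \<and> (\<forall>(e, a) \<in> G. card e = 2)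
     \<and> (\<forall>e a b. (e, a) \<in> G \<longrightarrow> (e, b) \<in> G \<longrightarrow> a = b)"

definition verts :: "('v, 'c) cgraph \<Rightarrow> 'v set" where
  "verts G = \<Union> (fst ` G)"

definition colors :: "('v, 'c) cgraph \<Rightarrow> 'c set" where
  "colors G = snd ` G"

definition uedges :: "('v, 'c) cgraph \<Rightarrow> 'v set set" where
  "uedges G = fst ` G"

definition rainbow :: "('v, 'c) cgraph \<Rightarrow> bool" where
  "rainbow G \<longleftrightarrow> card (colors G) = card G"

definition almost_rainbow :: "('v, 'c) cgraph \<Rightarrow> bool" where
  "almost_rainbow G \<longleftrightarrow> card (colors G) + 1 = card G"

definition path_between :: "('v, 'c) cgraph \<Rightarrow> 'v \<Rightarrow> 'v \<Rightarrow> bool" where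
  "path_between G s t \<longleftrightarrow> cgraph G \<and> s \<noteq> t \<and>
     (\<exists>vs. distinct vs \<and> length vs \<ge> 2 \<and> hd vs = s \<and> last vs = t \<and>
        uedges G = {{vs ! i, vs ! Suc i} | i. Suc i < length vs})"

definition is_path :: "('v, 'c) cgraph \<Rightarrow> bool" where
  "is_path G \<longleftrightarrow> (\<exists>s t. path_between G s t)"

definition is_cycle :: "('v, 'c) cgraph \<Rightarrow> bool" where
  "is_cycle G \<longleftrightarrow> cgraph G \<and>
     (\<exists>vs. distinct vs \<and> length vs \<ge> 3 \<and>
        uedges G = {{vs ! i, vs ! Suc i} | i. Suc i < length vs} \<union> {{last vs, hd vs}})"

definition connected_cg :: "('v, 'c) cgraph \<Rightarrow> bool" where
  "connected_cg G \<longleftrightarrow> (\<forall>u \<in> verts G. \<forall>v \<in> verts G.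
     (u, v) \<in> {(x, y). {x, y} \<in> uedges G}\<^sup>*)"

definition is_tree :: "('v, 'c) cgraph \<Rightarrow> bool" where
  "is_tree G \<longleftrightarrow> cgraph G \<and> G \<noteq> {} \<and> connected_cg G \<and> (\<forall>H \<subseteq> G. \<not> is_cycle H)"

definition long_rainbow_odd_cycle :: "('v, 'c) cgraph \<Rightarrow> bool" where
  "long_rainbow_odd_cycle G \<longleftrightarrow> is_cycle G \<and> rainbow G \<and> odd (card G) \<and> card G \<ge> 7"

definition theta_parts :: "('v, 'c) cgraph \<Rightarrow> ('v, 'c) cgraph \<Rightarrow> ('v, 'c) cgraph \<Rightarrow> 'v \<Rightarrow> 'v \<Rightarrow> bool" where
  "theta_parts P1 P2 P3 s t \<longleftrightarrow> s \<noteq> t \<and>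
     path_between P1 s t \<and> path_between P2 s t \<and> path_between P3 s t \<and>
     verts P1 \<inter> verts P2 \<subseteq> {s, t} \<and> verts P1 \<inter> verts P3 \<subseteq> {s, t} \<and>
     verts P2 \<inter> verts P3 \<subseteq> {s, t} \<and>
     uedges P1 \<inter> uedges P2 = {} \<and> uedges P1 \<inter> uedges P3 = {} \<and> uedges P2 \<inter> uedges P3 = {}"

definition is_theta :: "('v, 'c) cgraph \<Rightarrow> bool" where
  "is_theta G \<longleftrightarrow> (\<exists>P1 P2 P3 s t. theta_parts P1 P2 P3 s t \<and> G = P1 \<union> P2 \<union> P3)"

definition bad_piece :: "('v, 'c) cgraph \<Rightarrow> bool" where
  "bad_piece G \<longleftrightarrow> cgraph G \<and> almost_rainbow G \<and> card (verts G) \<ge> 6 \<and>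
     (\<exists>P1 P2 P3 s t. theta_parts P1 P2 P3 s t \<and> G = P1 \<union> P2 \<union> P3 \<and>
        rainbow P1 \<and> rainbow P2 \<and> rainbow P3)"

definition is_partition :: "('v, 'c) cgraph \<Rightarrow> ('v, 'c) cgraph list \<Rightarrow> bool" where
  "is_partition G Gs \<longleftrightarrow> (\<forall>H \<in> set Gs. cgraph H) \<and> G = \<Union> (set Gs) \<and>
     (\<forall>i < length Gs. \<forall>j < length Gs. i \<noteq> j \<longrightarrow>
        card (verts (Gs ! i) \<inter> verts (Gs ! j)) \<le> 1 \<and> colors (Gs ! i) \<inter> colors (Gs ! j) = {})"

definition frankenstein :: "('v, 'c) cgraph \<Rightarrow> ('v, 'c) cgraph list \<Rightarrow> bool" where
  "frankenstein F Gs \<longleftrightarrow> cgraph F \<and> is_partition F Gs \<and> Gs \<noteq> [] \<and>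
     (\<forall>H \<in> set Gs. long_rainbow_odd_cycle H \<or> bad_piece H \<or> (rainbow H \<and> is_tree H)) \<and>
     (\<forall>i < length Gs. \<forall>j < length Gs. i \<noteq> j \<longrightarrow>
        rainbow (Gs ! i) \<and> is_tree (Gs ! i) \<and> rainbow (Gs ! j) \<and> is_tree (Gs ! j) \<longrightarrow>
        verts (Gs ! i) \<inter> verts (Gs ! j) = {}) \<and>
     (\<forall>H \<subseteq> F. \<not> (is_cycle H \<and> rainbow H \<and> even (card H)))"

end

theory Submission imports Defs begin

definition pe :: "'v list \<Rightarrow> 'v set set" where
  "pe xs = {{xs ! i, xs ! Suc i} | i. Suc i < length xs}"

lemma pe_Nil[simp]: "pe [] = {}" by (simp add: pe_def)
lemma pe_single[simp]: "pe [a] = {}" by (simp add: pe_def)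

lemma pe_Cons2[simp]: "pe (a # b # xs) = insert {a, b} (pe (b # xs))"
proof (rule set_eqI)
  fix e
  show "e \<in> pe (a#b#xs) \<longleftrightarrow> e \<in> insert {a,b} (pe (b#xs))"
  proof
    assume "e \<in> pe (a#b#xs)"
    then obtain i where i: "Suc i < length (a#b#xs)" "e = {(a#b#xs)!i, (a#b#xs)!Suc i}"
      unfolding pe_def by blast
    show "e \<in> insert {a,b} (pe (b#xs))"
    proof (cases i)
      case 0 then show ?thesis using i by simp
    next
      case (Suc j)
      then have "Suc j < length (b#xs)" "e = {(b#xs)!j, (b#xs)!Suc j}" using i by auto
      then show ?thesis unfolding pe_def by blast
    qed
  next
    assume "e \<in> insert {a,b} (pe (b#xs))"
    then show "e \<in> pe (a#b#xs)"
    proof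
      assume "e = {a,b}"
      then have "Suc 0 < length (a#b#xs) \<and> e = {(a#b#xs)!0, (a#b#xs)!Suc 0}" by simp
      then show ?thesis unfolding pe_def by blast
    next
      assume "e \<in> pe (b#xs)"
      then obtain j where "Suc j < length (b#xs)" "e = {(b#xs)!j, (b#xs)!Suc j}"
        unfolding pe_def by blast
      then have "Suc (Suc j) < length (a#b#xs) \<and> e = {(a#b#xs)!Suc j, (a#b#xs)!Suc (Suc j)}" by simp
      then show ?thesis unfolding pe_def by blast
    qed
  qed
qed

lemma pe_Cons: "zs \<noteq> [] \<Longrightarrow> pe (y # zs) = insert {y, hd zs} (pe zs)"
  by (cases zs) auto

lemma pe_append: "xs \<noteq> [] \<Longrightarrow> ys \<noteq> [] \<Longrightarrow> pe (xs @ ys) = pe xs \<union> pe ys \<union> {{last xs, hd ys}}"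
proof (induction xs rule: induct_list012)
  case (2 x) then show ?case by (simp add: pe_Cons)
next
  case (3 x y zs) then show ?case by auto
qed simp

lemma pe_rev[simp]: "pe (rev xs) = pe xs"
proof (induction xs)
  case (Cons a xs)
  show ?case
  proof (cases "xs = []")
    case False
    have "pe (rev (a # xs)) = pe (rev xs @ [a])" by simp
    also have "\<dots> = pe xs \<union> {{hd xs, a}}" using False Cons.IH
      by (simp add: pe_append last_rev)
    also have "\<dots> = pe (a # xs)" using False by (simp add: pe_Cons insert_commute)
    finally show ?thesis .
  qed simp
qed simp

lemma pe_take_sub: "pe (take k xs) \<subseteq> pe xs"
proof (cases "take k xs = [] \<or> drop k xs = []")
  case True then show ?thesis by auto
next
  case False then show ?thesis using pe_append[of "take k xs" "drop k xs"] by auto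
qed

lemma pe_drop_sub: "pe (drop k xs) \<subseteq> pe xs"
proof (cases "take k xs = [] \<or> drop k xs = []")
  case True then show ?thesis by auto
next
  case False then show ?thesis using pe_append[of "take k xs" "drop k xs"] by auto
qed

lemma pe_image: "pe xs = (\<lambda>i. {xs ! i, xs ! Suc i}) ` {i. Suc i < length xs}"
  by (auto simp: pe_def)

lemma card_pe: assumes "distinct xs" shows "card (pe xs) = length xs - 1"
proof -
  have "inj_on (\<lambda>i. {xs ! i, xs ! Suc i}) {i. Suc i < length xs}"
  proof (rule inj_onI)
    fix i j assume i: "i \<in> {i. Suc i < length xs}" and j: "j \<in> {i. Suc i < length xs}"
      and e: "{xs ! i, xs ! Suc i} = {xs ! j, xs ! Suc j}"
    from i j have ii: "xs ! i = xs ! j \<longleftrightarrow> i = j" "xs ! i = xs ! Suc j \<longleftrightarrow> i = Suc j"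
       "xs ! Suc i = xs ! j \<longleftrightarrow> Suc i = j"
      using assms by (auto simp: nth_eq_iff_index_eq)
    from e have "xs ! i = xs ! j \<or> (xs ! i = xs ! Suc j \<and> xs ! Suc i = xs ! j)"
      by (auto simp: doubleton_eq_iff)
    then show "i = j" using ii by auto
  qed
  moreover have "card {i. Suc i < length xs} = length xs - 1"
  proof -
    have "{i. Suc i < length xs} = {..<length xs - 1}" by auto
    then show ?thesis by simp
  qed
  ultimately show ?thesis by (simp add: pe_image card_image)
qed

lemma set_sub_pe: assumes "length xs \<ge> 2" shows "set xs \<subseteq> \<Union> (pe xs)"
proof
  fix v assume "v \<in> set xs"
  then obtain i where i: "i < length xs" "v = xs ! i" by (auto simp: in_set_conv_nth)
  show "v \<in> \<Union> (pe xs)"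
  proof (cases "Suc i < length xs")
    case True
    have "{xs ! i, xs ! Suc i} \<in> pe xs" unfolding pe_def using True by blast
    then show ?thesis using i by blast
  next
    case False
    then have s: "Suc (i - 1) = i" "Suc (i - 1) < length xs" using i assms by auto
    have "{xs ! (i - 1), xs ! Suc (i - 1)} \<in> pe xs" unfolding pe_def using s(2) by blast
    then show ?thesis using i s(1) by auto
  qed
qed

lemma pe_sub_set: "\<Union> (pe xs) \<subseteq> set xs"
  by (auto simp: pe_def)

lemma cyc_eq: "vs \<noteq> [] \<Longrightarrow> pe (vs @ [hd vs]) = pe vs \<union> {{last vs, hd vs}}"
  by (simp add: pe_append)

lemma card_cyc: assumes d: "distinct vs" and l: "length vs \<ge> 3"
  shows "card (pe (vs @ [hd vs])) = length vs"
proof -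
  let ?n = "length vs"
  have ne: "vs \<noteq> []" using l by auto
  have notin: "{last vs, hd vs} \<notin> pe vs"
  proof
    assume "{last vs, hd vs} \<in> pe vs"
    moreover have "{last vs, hd vs} = {vs ! (?n - 1), vs ! 0}"
      using ne by (simp add: last_conv_nth hd_conv_nth)
    ultimately obtain i where i1: "Suc i < ?n" and i2: "{vs ! (?n - 1), vs ! 0} = {vs ! i, vs ! Suc i}"
      unfolding pe_def by auto
    have a1: "vs ! (?n - 1) = vs ! i \<longleftrightarrow> ?n - 1 = i"
      using i1 by (intro nth_eq_iff_index_eq[OF d]) auto
    have a2: "vs ! 0 = vs ! Suc i \<longleftrightarrow> 0 = Suc i"
      using i1 by (intro nth_eq_iff_index_eq[OF d]) auto
    have a3: "vs ! (?n - 1) = vs ! Suc i \<longleftrightarrow> ?n - 1 = Suc i"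
      using i1 by (intro nth_eq_iff_index_eq[OF d]) auto
    have a4: "vs ! 0 = vs ! i \<longleftrightarrow> 0 = i"
      using i1 by (intro nth_eq_iff_index_eq[OF d]) auto
    from i2 have "(vs ! (?n - 1) = vs ! i \<and> vs ! 0 = vs ! Suc i) \<or>
        (vs ! (?n - 1) = vs ! Suc i \<and> vs ! 0 = vs ! i)"
      by (simp add: doubleton_eq_iff)
    then show False
    proof
      assume "vs ! (?n - 1) = vs ! i \<and> vs ! 0 = vs ! Suc i"
      then show False using a2 by simp
    next
      assume "vs ! (?n - 1) = vs ! Suc i \<and> vs ! 0 = vs ! i"
      then have "?n - 1 = Suc i" "0 = i" using a3 a4 by simp_all
      then show False using l by simp
    qed
  qed
  have "finite {i. Suc i < length vs}" by (rule finite_subset[of _ "{..<length vs}"]) auto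
  then have "finite (pe vs)" by (simp add: pe_image)
  then have "card (pe vs \<union> {{last vs, hd vs}}) = card (pe vs) + 1" using notin by simp
  then show ?thesis using card_pe[OF d] l by (simp add: cyc_eq[OF ne])
qed


definition psub :: "('v, 'c) cgraph \<Rightarrow> 'v list \<Rightarrow> ('v, 'c) cgraph" where
  "psub F P = {p \<in> F. fst p \<in> pe P}"

definition rpath :: "('v, 'c) cgraph \<Rightarrow> ('v, 'c) cgraph \<Rightarrow> 'v list \<Rightarrow> 'v \<Rightarrow> 'v \<Rightarrow> bool" where
  "rpath F W P x y \<longleftrightarrow> distinct P \<and> P \<noteq> [] \<and> hd P = x \<and> last P = y \<and> pe P \<subseteq> uedges W
     \<and> inj_on snd (psub F P)"

definition nre :: "('v, 'c) cgraph \<Rightarrow> bool" where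
  "nre F \<longleftrightarrow> (\<forall>H \<subseteq> F. \<not> (is_cycle H \<and> rainbow H \<and> even (card H)))"

lemma rainbow_inj: "finite G \<Longrightarrow> rainbow G \<longleftrightarrow> inj_on snd G"
  by (simp add: rainbow_def colors_def inj_on_iff_eq_card)

lemma cgraph_finite: "cgraph G \<Longrightarrow> finite G" by (simp add: cgraph_def)

lemma cgraph_mono: assumes "cgraph G" "H \<subseteq> G" shows "cgraph H"
proof -
  have "finite H" using assms by (meson cgraph_def finite_subset)
  moreover have "\<forall>(e, a) \<in> H. card e = 2" using assms unfolding cgraph_def by blast
  moreover have "\<forall>e a b. (e, a) \<in> H \<longrightarrow> (e, b) \<in> H \<longrightarrow> a = b"
    using assms unfolding cgraph_def by blast
  ultimately show ?thesis unfolding cgraph_def by blast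
qed

lemma card_uedges: assumes "cgraph G" shows "card (uedges G) = card G"
proof -
  have "inj_on fst G" using assms unfolding cgraph_def inj_on_def by auto
  then show ?thesis by (simp add: uedges_def card_image)
qed

lemma psub_sub: assumes cg: "cgraph F" and W: "W \<subseteq> F" and e: "pe P \<subseteq> uedges W"
  shows "psub F P \<subseteq> W"
proof
  fix p assume p: "p \<in> psub F P"
  obtain e c where pe: "p = (e, c)" by (cases p)
  have "p \<in> F" "e \<in> pe P" using p pe by (auto simp: psub_def)
  then obtain c' where "(e, c') \<in> W" using e by (auto simp: uedges_def)
  moreover have "c' = c" using cg W \<open>p \<in> F\<close> pe calculation unfolding cgraph_def by blast
  ultimately show "p \<in> W" using pe by simp
qed

lemma uedges_psub: assumes "pe P \<subseteq> uedges F" shows "uedges (psub F P) = pe P"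
proof
  show "uedges (psub F P) \<subseteq> pe P" unfolding psub_def uedges_def by auto
  show "pe P \<subseteq> uedges (psub F P)"
  proof
    fix e assume "e \<in> pe P"
    then obtain c where "(e, c) \<in> F" using assms by (auto simp: uedges_def)
    then have "(e, c) \<in> psub F P" using \<open>e \<in> pe P\<close> by (simp add: psub_def)
    then show "e \<in> uedges (psub F P)" unfolding uedges_def by force
  qed
qed

lemma psub_finite: "cgraph F \<Longrightarrow> finite (psub F P)"
  unfolding psub_def cgraph_def by auto

lemma card_psub: assumes "cgraph F" "pe P \<subseteq> uedges F" "distinct P"
  shows "card (psub F P) = length P - 1"
proof -
  have "cgraph (psub F P)" using assms(1) by (rule cgraph_mono) (auto simp: psub_def)
  then have "card (psub F P) = card (uedges (psub F P))" by (simp add: card_uedges)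
  also have "\<dots> = card (pe P)" using assms(2) by (simp add: uedges_psub)
  finally show ?thesis using card_pe[OF assms(3)] by simp
qed

lemma psub_mono: "pe P \<subseteq> pe Q \<Longrightarrow> psub F P \<subseteq> psub F Q"
  unfolding psub_def by auto

lemma psub_pe_eq: "pe R = pe A \<union> pe B \<Longrightarrow> psub F R = psub F A \<union> psub F B"
  unfolding psub_def by auto

lemma verts_uedges: "verts W = \<Union> (uedges W)"
  by (simp add: verts_def uedges_def)

lemma uedges_Un: "uedges (A \<union> B) = uedges A \<union> uedges B"
  by (simp add: uedges_def image_Un)

lemma verts_Un: "verts (A \<union> B) = verts A \<union> verts B"
  by (simp add: verts_def image_Un)

lemma len2: "P \<noteq> [] \<Longrightarrow> hd P \<noteq> last P \<Longrightarrow> length P \<ge> 2"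
  by (cases P; cases "tl P") auto

lemma rpath_set: "rpath F W P x y \<Longrightarrow> x \<noteq> y \<Longrightarrow> set P \<subseteq> verts W"
  unfolding rpath_def verts_uedges using set_sub_pe[of P] len2[of P] by blast

lemma rpath_mono: "rpath F W P x y \<Longrightarrow> uedges W \<subseteq> uedges W' \<Longrightarrow> rpath F W' P x y"
  unfolding rpath_def by auto

lemma rpath_rev: "rpath F W P x y \<Longrightarrow> rpath F W (rev P) y x"
  unfolding rpath_def psub_def by (auto simp: hd_rev last_rev)

lemma cycle_odd:
  assumes nre: "nre F" and cg: "cgraph F" and d: "distinct vs" and l: "length vs \<ge> 3"
    and e: "pe (vs @ [hd vs]) \<subseteq> uedges F" and inj: "inj_on snd (psub F (vs @ [hd vs]))"
  shows "odd (length vs)"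
proof
  assume ev: "even (length vs)"
  let ?H = "psub F (vs @ [hd vs])"
  have sub: "?H \<subseteq> F" by (auto simp: psub_def)
  have cgH: "cgraph ?H" using cg sub by (rule cgraph_mono)
  have ne: "vs \<noteq> []" using l by auto
  have uH: "uedges ?H = pe (vs @ [hd vs])" using e by (rule uedges_psub)
  have "is_cycle ?H"
    unfolding is_cycle_def using cgH d l uH cyc_eq[OF ne] by (auto simp: pe_def)
  moreover have "rainbow ?H" using inj rainbow_inj[OF cgraph_finite[OF cgH]] by simp
  moreover have "card ?H = length vs"
    using card_uedges[OF cgH] uH card_cyc[OF d l] by simp
  ultimately show False using nre sub ev unfolding nre_def by auto
qed

lemma split_path:
  assumes "P \<noteq> []" "hd P \<noteq> last P"
  shows "P = hd P # butlast (tl P) @ [last P]"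
proof -
  have t: "tl P \<noteq> []" using assms by (cases P) auto
  have "P = hd P # tl P" using assms by simp
  also have "tl P = butlast (tl P) @ [last (tl P)]" using t by simp
  also have "last (tl P) = last P" using assms t by (cases P) auto
  finally show ?thesis .
qed

lemma two_path_cycle:
  assumes dA: "distinct A" and dB: "distinct B" and nA: "A \<noteq> []" and nB: "B \<noteq> []"
    and hA: "hd A = x" and hB: "hd B = x" and lA: "last A = y" and lB: "last B = y"
    and xy: "x \<noteq> y" and dis: "set A \<inter> set B \<subseteq> {x, y}"
  shows "\<exists>vs. distinct vs \<and> length vs + 2 = length A + length B \<and>
     pe (vs @ [hd vs]) = pe A \<union> pe B \<and> set vs = set A \<union> set B"
proof -
  define M where "M = butlast (tl B)"
  have B: "B = x # M @ [y]" using split_path[OF nB] hB lB xy by (simp add: M_def)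
  have xM: "x \<notin> set M" "y \<notin> set M" "distinct M" using dB xy by (subst (asm) B; auto)+
  have AM: "set A \<inter> set M = {}" using dis xM B by auto
  define vs where "vs = A @ rev M"
  have hv: "hd vs = x" using nA hA by (simp add: vs_def)
  have "distinct vs" using dA xM AM by (simp add: vs_def)
  moreover have "length vs + 2 = length A + length B" by (simp add: vs_def B)
  moreover have "pe (vs @ [hd vs]) = pe A \<union> pe B"
  proof -
    have "pe (vs @ [hd vs]) = pe (A @ (rev M @ [x]))" unfolding hv by (simp add: vs_def)
    also have "\<dots> = pe A \<union> pe (rev M @ [x]) \<union> {{y, hd (rev M @ [x])}}"
      using nA lA by (simp add: pe_append)
    finally have 1: "pe (vs @ [hd vs]) = pe A \<union> pe (rev M @ [x]) \<union> {{y, hd (rev M @ [x])}}" .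
    have "pe B = pe (rev B)" by simp
    also have "rev B = y # (rev M @ [x])" by (simp add: B)
    also have "pe (y # (rev M @ [x])) = insert {y, hd (rev M @ [x])} (pe (rev M @ [x]))"
      by (simp add: pe_Cons)
    finally show ?thesis using 1 by auto
  qed
  moreover have "set vs = set A \<union> set B"
    using nA hA lA by (auto simp: vs_def B)
  ultimately show ?thesis by blast
qed

lemma two_paths_odd:
  assumes nre: "nre F" and cg: "cgraph F"
    and dA: "distinct A" and dB: "distinct B" and nA: "A \<noteq> []" and nB: "B \<noteq> []"
    and hA: "hd A = x" and hB: "hd B = x" and lA: "last A = y" and lB: "last B = y"
    and xy: "x \<noteq> y" and dis: "set A \<inter> set B \<subseteq> {x, y}"
    and eA: "pe A \<subseteq> uedges F" and eB: "pe B \<subseteq> uedges F"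
    and iA: "inj_on snd (psub F A)" and iB: "inj_on snd (psub F B)"
    and cd: "snd ` psub F A \<inter> snd ` psub F B = {}"
  shows "odd (length A + length B)"
proof -
  obtain vs where vs: "distinct vs" "length vs + 2 = length A + length B"
     "pe (vs @ [hd vs]) = pe A \<union> pe B"
    using two_path_cycle[OF dA dB nA nB hA hB lA lB xy dis] by blast
  have la: "length A \<ge> 2" using len2[OF nA] hA lA xy by simp
  have lb: "length B \<ge> 2" using len2[OF nB] hB lB xy by simp
  have "length A + length B \<ge> 5"
  proof (rule ccontr)
    assume "\<not> ?thesis"
    then have l: "length A = 2" "length B = 2" using la lb by auto
    have sA: "A = x # butlast (tl A) @ [y]" using split_path[OF nA] hA lA xy by simp
    have sB: "B = x # butlast (tl B) @ [y]" using split_path[OF nB] hB lB xy by simp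
    have "length (butlast (tl A)) = 0" "length (butlast (tl B)) = 0" using l by simp_all
    then have e1: "butlast (tl A) = []" "butlast (tl B) = []" by (simp_all only: length_0_conv)
    have "A = [x, y]" using sA[unfolded e1(1)] by simp
    moreover have "B = [x, y]" using sB[unfolded e1(2)] by simp
    ultimately have "A = [x, y]" "B = [x, y]" by auto
    then have "{x, y} \<in> uedges F" using eA by simp
    then obtain c where c: "({x, y}, c) \<in> F" by (auto simp: uedges_def)
    then have "({x,y}, c) \<in> psub F A" "({x,y}, c) \<in> psub F B"
      using \<open>A = [x,y]\<close> \<open>B = [x,y]\<close> by (auto simp: psub_def)
    then show False using cd by (metis disjoint_iff image_eqI snd_conv)
  qed
  then have l3: "length vs \<ge> 3" using vs(2) by simp
  have "psub F (vs @ [hd vs]) = psub F A \<union> psub F B" using vs(3) by (rule psub_pe_eq)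
  moreover have "inj_on snd (psub F A \<union> psub F B)"
    using iA iB cd by (auto simp: inj_on_Un)
  ultimately have "inj_on snd (psub F (vs @ [hd vs]))" by simp
  moreover have "pe (vs @ [hd vs]) \<subseteq> uedges F" using vs(3) eA eB by simp
  ultimately have "odd (length vs)" using cycle_odd[OF nre cg vs(1) l3] by simp
  then show ?thesis using vs(2) by presburger
qed

lemma concat_path:
  assumes dA: "distinct A" and dB: "distinct B" and nA: "A \<noteq> []" and nB: "B \<noteq> []"
    and j: "last A = hd B" and dis: "set A \<inter> set B \<subseteq> {hd B}"
    and iA: "inj_on snd (psub F A)" and iB: "inj_on snd (psub F B)"
    and cd: "snd ` psub F A \<inter> snd ` psub F B = {}"
  shows "distinct (A @ tl B) \<and> A @ tl B \<noteq> [] \<and> hd (A @ tl B) = hd A \<and> last (A @ tl B) = last B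
    \<and> pe (A @ tl B) = pe A \<union> pe B \<and> inj_on snd (psub F (A @ tl B))
    \<and> length (A @ tl B) + 1 = length A + length B"
proof -
  have B: "B = hd B # tl B" using nB by simp
  have hn: "hd B \<notin> set (tl B)" "distinct (tl B)" using dB B by (metis distinct.simps(2))+
  have "set A \<inter> set (tl B) = {}"
  proof -
    have "set (tl B) \<subseteq> set B" using B by (metis set_subset_Cons)
    then show ?thesis using dis hn by blast
  qed
  then have d1: "distinct (A @ tl B)" using dA hn by simp
  have pe: "pe (A @ tl B) = pe A \<union> pe B"
  proof (cases "tl B = []")
    case True then have "pe B = {}" using B by (metis pe_single)
    then show ?thesis using True by simp
  next
    case False
    then have "pe (A @ tl B) = pe A \<union> pe (tl B) \<union> {{last A, hd (tl B)}}" using nA by (simp add: pe_append)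
    also have "pe B = insert {hd B, hd (tl B)} (pe (tl B))" using False by (subst B, simp add: pe_Cons)
    ultimately show ?thesis using j by auto
  qed
  have "last (A @ tl B) = last B"
  proof (cases "tl B = []")
    case True then show ?thesis using nA j B by (metis append_Nil2 last_ConsL)
  next
    case False then show ?thesis using B by (metis last_ConsR last_appendR)
  qed
  moreover have "inj_on snd (psub F (A @ tl B))"
    using psub_pe_eq[OF pe, of F] iA iB cd by (auto simp: inj_on_Un)
  moreover have "length (A @ tl B) + 1 = length A + length B" using nB by (cases B) auto
  ultimately show ?thesis using d1 pe nA by simp
qed


lemma arcs_lt:
  assumes d: "distinct vs" and ij: "i < j" and jn: "j < length vs"
  shows "\<forall>b. \<exists>P. distinct P \<and> P \<noteq> [] \<and> hd P = vs ! i \<and> last P = vs ! j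
      \<and> pe P \<subseteq> pe (vs @ [hd vs]) \<and> (even (length P) \<longleftrightarrow> b) \<or> (even (length vs))"
proof -
  have ne: "vs \<noteq> []" using jn by auto
  have cyc: "pe (vs @ [hd vs]) = pe vs \<union> {{last vs, hd vs}}" using cyc_eq[OF ne] .
  define P1 where "P1 = drop i (take (Suc j) vs)"
  define P2 where "P2 = rev (take (Suc i) vs) @ rev (drop j vs)"
  have P1: "distinct P1" "P1 \<noteq> []" "hd P1 = vs ! i" "last P1 = vs ! j" "pe P1 \<subseteq> pe (vs @ [hd vs])"
    "length P1 = Suc j - i"
  proof -
    show "distinct P1" using d by (simp add: P1_def)
    show "P1 \<noteq> []" using ij jn by (simp add: P1_def)
    show "hd P1 = vs ! i" using ij jn by (simp add: P1_def hd_drop_conv_nth)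
    have "last P1 = last (take (Suc j) vs)" using ij jn by (simp add: P1_def)
    also have "\<dots> = vs ! j" using jn by (simp add: take_Suc_conv_app_nth)
    finally show "last P1 = vs ! j" .
    have "pe P1 \<subseteq> pe (take (Suc j) vs)" unfolding P1_def by (rule pe_drop_sub)
    also have "\<dots> \<subseteq> pe vs" by (rule pe_take_sub)
    finally show "pe P1 \<subseteq> pe (vs @ [hd vs])" using cyc by auto
    show "length P1 = Suc j - i" using jn by (simp add: P1_def)
  qed
  have P2: "distinct P2" "P2 \<noteq> []" "hd P2 = vs ! i" "last P2 = vs ! j" "pe P2 \<subseteq> pe (vs @ [hd vs])"
    "length P2 = Suc i + (length vs - j)"
  proof -
    have dis: "set (take (Suc i) vs) \<inter> set (drop j vs) = {}"
      using ij by (intro set_take_disj_set_drop_if_distinct[OF d]) auto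
    show "distinct P2" using d dis by (simp add: P2_def)
    show "P2 \<noteq> []" using ij jn by (simp add: P2_def)
    show "hd P2 = vs ! i" using ij jn by (simp add: P2_def hd_rev take_Suc_conv_app_nth)
    show "last P2 = vs ! j" using ij jn by (simp add: P2_def last_rev hd_drop_conv_nth)
    have n1: "rev (take (Suc i) vs) \<noteq> []" "rev (drop j vs) \<noteq> []" using ne jn by auto
    have "pe P2 = pe (take (Suc i) vs) \<union> pe (drop j vs) \<union> {{hd vs, last vs}}"
      using jn ne unfolding P2_def by (simp add: pe_append[OF n1] last_rev hd_rev)
    then show "pe P2 \<subseteq> pe (vs @ [hd vs])" using cyc pe_take_sub[of "Suc i" vs] pe_drop_sub[of j vs]
      by (auto simp: insert_commute)
    show "length P2 = Suc i + (length vs - j)" using ij jn by (simp add: P2_def)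
  qed
  have sum: "length P1 + length P2 = length vs + 2" using P1(6) P2(6) ij jn by simp
  show ?thesis
  proof (cases "even (length vs)")
    case False
    then have "even (length P1) \<longleftrightarrow> \<not> even (length P2)" using sum by presburger
    then show ?thesis using P1 P2 by (metis (full_types))
  qed simp
qed

lemma cycle_arcs:
  assumes d: "distinct vs" and od: "odd (length vs)" and x: "x \<in> set vs" and y: "y \<in> set vs"
    and xy: "x \<noteq> y"
  shows "\<exists>P. distinct P \<and> P \<noteq> [] \<and> hd P = x \<and> last P = y
      \<and> pe P \<subseteq> pe (vs @ [hd vs]) \<and> (even (length P) \<longleftrightarrow> b)"
proof -
  obtain i j where i: "i < length vs" "x = vs ! i" and j: "j < length vs" "y = vs ! j"
    using x y by (auto simp: in_set_conv_nth)
  have "i \<noteq> j" using xy i j by auto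
  then consider "i < j" | "j < i" by linarith
  then show ?thesis
  proof cases
    case 1 then show ?thesis using arcs_lt[OF d 1 j(1)] od i j by blast
  next
    case 2
    then obtain P where P: "distinct P" "P \<noteq> []" "hd P = y" "last P = x"
      "pe P \<subseteq> pe (vs @ [hd vs])" "even (length P) \<longleftrightarrow> b"
      using arcs_lt[OF d 2 i(1)] od i j by blast
    show ?thesis
      by (rule exI[of _ "rev P"]) (use P in \<open>simp add: hd_rev last_rev\<close>)
  qed
qed

lemma rpath_concat:
  assumes cg: "cgraph F" and W1: "W1 \<subseteq> F" and W2: "W2 \<subseteq> F"
    and A: "rpath F W1 A x a" and B: "rpath F W2 B a y"
    and dis: "set A \<inter> set B \<subseteq> {a}"
    and cd: "snd ` W1 \<inter> snd ` W2 = {}"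
  shows "rpath F (W1 \<union> W2) (A @ tl B) x y \<and> length (A @ tl B) + 1 = length A + length B"
proof -
  have s1: "psub F A \<subseteq> W1" using psub_sub[OF cg W1] A by (auto simp: rpath_def)
  have s2: "psub F B \<subseteq> W2" using psub_sub[OF cg W2] B by (auto simp: rpath_def)
  have cd': "snd ` psub F A \<inter> snd ` psub F B = {}" using cd s1 s2 by blast
  have "last A = hd B" "set A \<inter> set B \<subseteq> {hd B}" using A B dis by (auto simp: rpath_def)
  from concat_path[OF _ _ _ _ this _ _ cd'] A B
  show ?thesis by (auto simp: rpath_def uedges_Un)
qed


lemma rpath_prefix:
  assumes P: "rpath F W P x y" and k: "k < length P"
  shows "rpath F W (take (Suc k) P) x (P ! k)"
proof -
  have "pe (take (Suc k) P) \<subseteq> pe P" by (rule pe_take_sub)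
  moreover have "psub F (take (Suc k) P) \<subseteq> psub F P" using calculation by (rule psub_mono)
  moreover have "distinct (take (Suc k) P)" using P by (simp add: rpath_def)
  moreover have "hd (take (Suc k) P) = x" using P by (simp add: rpath_def)
  moreover have "last (take (Suc k) P) = P ! k" using k by (simp add: take_Suc_conv_app_nth)
  moreover have "take (Suc k) P \<noteq> []" using k by (cases P) auto
  ultimately show ?thesis using P unfolding rpath_def by (blast intro: inj_on_subset)
qed

lemma min_pair:
  assumes "x \<in> X" "y \<in> X" "x \<noteq> y" "rpath F W P x y"
  shows "\<exists>x' y' P'. x' \<in> X \<and> y' \<in> X \<and> x' \<noteq> y' \<and> rpath F W P' x' y' \<and> set P' \<inter> X \<subseteq> {x', y'}"
  using assms
proof (induction "length P" arbitrary: x y P rule: less_induct)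
  case less
  show ?case
  proof (cases "set P \<inter> X \<subseteq> {x, y}")
    case True then show ?thesis using less.prems by blast
  next
    case False
    then obtain z where z: "z \<in> set P" "z \<in> X" "z \<noteq> x" "z \<noteq> y" by blast
    then obtain k where k: "k < length P" "P ! k = z" by (auto simp: in_set_conv_nth)
    have ne: "P \<noteq> []" and hx: "hd P = x" and ly: "last P = y" using less.prems by (auto simp: rpath_def)
    have "k \<noteq> 0"
    proof
      assume "k = 0" then have "z = x" using k hx ne by (simp add: hd_conv_nth)
      then show False using z by simp
    qed
    have "k \<noteq> length P - 1" using k z ly ne by (auto simp: last_conv_nth)
    then have sk: "Suc k < length P" using k by auto
    have r: "rpath F W (take (Suc k) P) x z" using rpath_prefix[OF less.prems(4) k(1)] k by simp
    have "length (take (Suc k) P) < length P" using sk by simp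
    from less.hyps[OF this less.prems(1) z(2) z(3)[symmetric] r] show ?thesis .
  qed
qed

lemma walk_path:
  assumes "(x, y) \<in> {(a, b). {a, b} \<in> E}\<^sup>*"
  shows "\<exists>P. distinct P \<and> P \<noteq> [] \<and> hd P = x \<and> last P = y \<and> pe P \<subseteq> E"
  using assms
proof (induction rule: rtrancl_induct)
  case base
  show ?case by (rule exI[of _ "[x]"]) simp
next
  case (step y z)
  then obtain P where P: "distinct P" "P \<noteq> []" "hd P = x" "last P = y" "pe P \<subseteq> E" by blast
  have yz: "{y, z} \<in> E" using step by simp
  show ?case
  proof (cases "z \<in> set P")
    case True
    then obtain k where k: "k < length P" "P ! k = z" by (auto simp: in_set_conv_nth)
    have "pe (take (Suc k) P) \<subseteq> E" using pe_take_sub[of "Suc k" P] P(5) by blast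
    moreover have "distinct (take (Suc k) P)" using P by simp
    moreover have "hd (take (Suc k) P) = x" using P by simp
    moreover have "last (take (Suc k) P) = z" using k by (simp add: take_Suc_conv_app_nth)
    moreover have "take (Suc k) P \<noteq> []" using k by (cases P) auto
    ultimately show ?thesis by blast
  next
    case False
    have "pe (P @ [z]) = pe P \<union> {{y, z}}" using P by (simp add: pe_append)
    then have "pe (P @ [z]) \<subseteq> E" using P(5) yz by blast
    moreover have "distinct (P @ [z])" using P False by simp
    moreover have "hd (P @ [z]) = x" using P by simp
    ultimately show ?thesis by (intro exI[of _ "P @ [z]"]) simp
  qed
qed

lemma tree_part:
  assumes cg: "cgraph F" and HF: "H \<subseteq> F" and rb: "rainbow H" and tr: "is_tree H"
    and x: "x \<in> verts H" and y: "y \<in> verts H"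
  shows "\<exists>P. rpath F H P x y"
proof -
  have cgH: "cgraph H" using tr by (simp add: is_tree_def)
  have c: "(x, y) \<in> {(a, b). {a, b} \<in> uedges H}\<^sup>*" using tr x y by (simp add: is_tree_def connected_cg_def)
  obtain P where P: "distinct P" "P \<noteq> []" "hd P = x" "last P = y" "pe P \<subseteq> uedges H"
    using walk_path[OF c] by blast
  have "psub F P \<subseteq> H" using psub_sub[OF cg HF P(5)] .
  moreover have "inj_on snd H" using rb rainbow_inj[OF cgraph_finite[OF cgH]] by simp
  ultimately have "inj_on snd (psub F P)" by (rule inj_on_subset[rotated])
  then show ?thesis using P by (auto simp: rpath_def)
qed

lemma cycle_list:
  assumes "is_cycle H"
  obtains vs where "distinct vs" "length vs \<ge> 3" "uedges H = pe (vs @ [hd vs])"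
proof -
  obtain vs where vs: "distinct vs" "length vs \<ge> 3"
    "uedges H = {{vs ! i, vs ! Suc i} | i. Suc i < length vs} \<union> {{last vs, hd vs}}"
    using assms by (auto simp: is_cycle_def)
  have ne: "vs \<noteq> []" using vs by auto
  have "uedges H = pe vs \<union> {{last vs, hd vs}}" using vs(3) unfolding pe_def .
  then have "uedges H = pe (vs @ [hd vs])" using cyc_eq[OF ne] by simp
  then show ?thesis using that vs by blast
qed

lemma verts_cyc:
  assumes "length vs \<ge> 3" shows "\<Union> (pe (vs @ [hd vs])) = set vs"
proof -
  have ne: "vs \<noteq> []" using assms by auto
  have s: "set (vs @ [hd vs]) = set vs" using ne hd_in_set[OF ne] by auto
  have "\<Union> (pe (vs @ [hd vs])) \<subseteq> set (vs @ [hd vs])" by (rule pe_sub_set)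
  moreover have "set (vs @ [hd vs]) \<subseteq> \<Union> (pe (vs @ [hd vs]))"
    by (rule set_sub_pe) (use assms in simp)
  ultimately show ?thesis using s by blast
qed

lemma odd_cycle_part:
  assumes cg: "cgraph F" and HF: "H \<subseteq> F" and oc: "long_rainbow_odd_cycle H"
    and x: "x \<in> verts H" and y: "y \<in> verts H" and xy: "x \<noteq> y"
  shows "\<exists>P. rpath F H P x y \<and> (even (length P) \<longleftrightarrow> b)"
proof -
  have cy: "is_cycle H" and rb: "rainbow H" and od: "odd (card H)"
    using oc by (auto simp: long_rainbow_odd_cycle_def)
  have cgH: "cgraph H" using cy by (simp add: is_cycle_def)
  obtain vs where vs: "distinct vs" "length vs \<ge> 3" "uedges H = pe (vs @ [hd vs])"
    using cycle_list[OF cy] by blast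
  have "card H = length vs" using card_uedges[OF cgH] vs card_cyc[OF vs(1,2)] by simp
  then have odv: "odd (length vs)" using od by simp
  have "verts H = set vs" using vs verts_cyc by (simp add: verts_uedges)
  then obtain P where P: "distinct P" "P \<noteq> []" "hd P = x" "last P = y"
      "pe P \<subseteq> pe (vs @ [hd vs])" "even (length P) \<longleftrightarrow> b"
    using cycle_arcs[OF vs(1) odv _ _ xy, of b] x y by auto
  have "psub F P \<subseteq> H" using psub_sub[OF cg HF] P(5) vs(3) by simp
  moreover have "inj_on snd H" using rb rainbow_inj[OF cgraph_finite[OF cgH]] by simp
  ultimately have "inj_on snd (psub F P)" by (rule inj_on_subset[rotated])
  then show ?thesis using P vs(3) by (auto simp: rpath_def)
qed


lemma pe_finite: "finite (pe xs)"
proof -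
  have "finite {i. Suc i < length xs}" by (rule finite_subset[of _ "{..<length xs}"]) auto
  then show ?thesis by (simp add: pe_image)
qed

lemma pe_split: assumes "p < length xs" shows "pe xs = pe (take (Suc p) xs) \<union> pe (drop p xs)"
proof (cases "Suc p = length xs")
  case True
  then have "drop p xs = [xs ! p]" by (metis Cons_nth_drop_Suc assms drop_all order_refl)
  then show ?thesis using True by simp
next
  case False
  then have l: "Suc p < length xs" using assms by simp
  have n1: "take (Suc p) xs \<noteq> []" "drop (Suc p) xs \<noteq> []" using l by auto
  have "pe xs = pe (take (Suc p) xs @ drop (Suc p) xs)" by simp
  also have "\<dots> = pe (take (Suc p) xs) \<union> pe (drop (Suc p) xs) \<union> {{xs ! p, hd (drop (Suc p) xs)}}"
  proof -
    have "last (take (Suc p) xs) = xs ! p" using l by (simp add: take_Suc_conv_app_nth)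
    then show ?thesis by (simp only: pe_append[OF n1])
  qed
  finally have 1: "pe xs = pe (take (Suc p) xs) \<union> pe (drop (Suc p) xs) \<union> {{xs ! p, hd (drop (Suc p) xs)}}" .
  have "pe (drop p xs) = pe (xs ! p # drop (Suc p) xs)" using assms by (simp add: Cons_nth_drop_Suc)
  also have "\<dots> = insert {xs ! p, hd (drop (Suc p) xs)} (pe (drop (Suc p) xs))" using n1(2) by (rule pe_Cons)
  finally show ?thesis using 1 by auto
qed

lemma pe_take_drop_disj:
  assumes d: "distinct xs" and p: "p < length xs"
  shows "pe (take (Suc p) xs) \<inter> pe (drop p xs) = {}"
proof -
  have "card (pe (take (Suc p) xs)) + card (pe (drop p xs)) = card (pe xs) + card (pe (take (Suc p) xs) \<inter> pe (drop p xs))"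
    using pe_split[OF p] card_Un_Int[OF pe_finite pe_finite] by simp
  moreover have "card (pe (take (Suc p) xs)) = p" using card_pe[of "take (Suc p) xs"] d p by simp
  moreover have "card (pe (drop p xs)) = length xs - p - 1" using card_pe[of "drop p xs"] d p by simp
  moreover have "card (pe xs) = length xs - 1" using card_pe[OF d] .
  ultimately have "card (pe (take (Suc p) xs) \<inter> pe (drop p xs)) = 0" using p by simp
  moreover have "finite (pe (take (Suc p) xs) \<inter> pe (drop p xs))" using pe_finite by blast
  ultimately show ?thesis by simp
qed

lemma cat:
  assumes A: "rpath F F A x a" and B: "rpath F F B a y" and dis: "set A \<inter> set B \<subseteq> {a}"
    and cd: "snd ` psub F A \<inter> snd ` psub F B = {}"
  shows "rpath F F (A @ tl B) x y \<and> pe (A @ tl B) = pe A \<union> pe B \<and> set (A @ tl B) = set A \<union> set B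
    \<and> snd ` psub F (A @ tl B) = snd ` psub F A \<union> snd ` psub F B
    \<and> length (A @ tl B) + 1 = length A + length B"
proof -
  have dA: "distinct A" "A \<noteq> []" "hd A = x" "last A = a" "pe A \<subseteq> uedges F" "inj_on snd (psub F A)"
    using A by (auto simp: rpath_def)
  have dB: "distinct B" "B \<noteq> []" "hd B = a" "last B = y" "pe B \<subseteq> uedges F" "inj_on snd (psub F B)"
    using B by (auto simp: rpath_def)
  have j: "last A = hd B" using dA dB by simp
  have dis': "set A \<inter> set B \<subseteq> {hd B}" using dis dB by simp
  note c = concat_path[OF dA(1) dB(1) dA(2) dB(2) j dis' dA(6) dB(6) cd]
  have ps: "psub F (A @ tl B) = psub F A \<union> psub F B" using c psub_pe_eq by blast
  have "set B = insert (hd B) (set (tl B))" using dB(2) by (cases B) auto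
  moreover have "hd B \<in> set A" using j dA(2) last_in_set by metis
  ultimately have st: "set (A @ tl B) = set A \<union> set B" by auto
  show ?thesis using c ps st dA dB unfolding rpath_def by (simp add: image_Un)
qed


lemma rpath_sub:
  assumes P: "rpath F F P u v" and Q: "distinct Q" "Q \<noteq> []" "pe Q \<subseteq> pe P"
  shows "rpath F F Q (hd Q) (last Q)"
proof -
  have "psub F Q \<subseteq> psub F P" using Q(3) by (rule psub_mono)
  then show ?thesis using P Q unfolding rpath_def by (blast intro: inj_on_subset)
qed

lemma col_sub: "pe Q \<subseteq> pe P \<Longrightarrow> snd ` psub F Q \<subseteq> snd ` psub F P"
  using psub_mono by blast

lemma not_in_take:
  assumes d: "distinct xs" and l: "Suc p < length xs"
  shows "last xs \<notin> set (take (Suc p) xs)"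
proof -
  have "last xs \<in> set (drop (Suc p) xs)" using l
    by (metis drop_eq_Nil last_drop last_in_set not_le)
  then show ?thesis using set_take_disj_set_drop_if_distinct[OF d, of "Suc p" "Suc p"] by blast
qed

lemma not_in_drop:
  assumes d: "distinct xs" and p: "0 < p" "p < length xs"
  shows "hd xs \<notin> set (drop p xs)"
proof -
  have ne: "take p xs \<noteq> []" using p by auto
  have "hd (take p xs) = hd xs" using p by simp
  then have "hd xs \<in> set (take p xs)" using hd_in_set[OF ne] by simp
  then show ?thesis using set_take_disj_set_drop_if_distinct[OF d, of p p] by blast
qed

lemma cross:
  assumes cg: "cgraph F"
   and w1: "rpath F F ws1 s t" and w2: "rpath F F ws2 s t" and w3: "rpath F F ws3 s t" and st: "s \<noteq> t"
   and i12: "set ws1 \<inter> set ws2 \<subseteq> {s,t}" and i13: "set ws1 \<inter> set ws3 \<subseteq> {s,t}"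
   and i23: "set ws2 \<inter> set ws3 \<subseteq> {s,t}"
   and c13: "snd ` psub F ws1 \<inter> snd ` psub F ws3 = {}" and c23: "snd ` psub F ws2 \<inter> snd ` psub F ws3 = {}"
   and c12: "card (snd ` psub F ws1 \<inter> snd ` psub F ws2) \<le> 1"
   and o23: "odd (length ws2 + length ws3)"
   and x: "x \<in> set ws1" "x \<notin> {s,t}" and y: "y \<in> set ws2" "y \<notin> {s,t}"
  shows "\<exists>P. rpath F F P x y \<and> pe P \<subseteq> pe ws1 \<union> pe ws2 \<union> pe ws3 \<and> (even (length P) \<longleftrightarrow> b)"
proof -
  have W1: "distinct ws1" "ws1 \<noteq> []" "hd ws1 = s" "last ws1 = t" using w1 by (auto simp: rpath_def)
  have W2: "distinct ws2" "ws2 \<noteq> []" "hd ws2 = s" "last ws2 = t" using w2 by (auto simp: rpath_def)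
  have W3: "distinct ws3" "ws3 \<noteq> []" "hd ws3 = s" "last ws3 = t" using w3 by (auto simp: rpath_def)
  obtain p where p: "p < length ws1" "x = ws1 ! p" using x by (auto simp: in_set_conv_nth)
  obtain q where q: "q < length ws2" "y = ws2 ! q" using y by (auto simp: in_set_conv_nth)
  have p0: "0 < p" using p x W1 by (cases p) (auto simp: hd_conv_nth)
  have p1: "Suc p < length ws1"
  proof (rule ccontr)
    assume "\<not> ?thesis" then have "p = length ws1 - 1" using p by simp
    then show False using p x W1 by (simp add: last_conv_nth)
  qed
  have q0: "0 < q" using q y W2 by (cases q) (auto simp: hd_conv_nth)
  have q1: "Suc q < length ws2"
  proof (rule ccontr)
    assume "\<not> ?thesis" then have "q = length ws2 - 1" using q by simp
    then show False using q y W2 by (simp add: last_conv_nth)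
  qed
  define al where "al = rev (take (Suc p) ws1)"
  define be where "be = drop p ws1"
  define ga where "ga = take (Suc q) ws2"
  define de where "de = rev (drop q ws2)"
  let ?C1 = "snd ` psub F ws1" and ?C2 = "snd ` psub F ws2" and ?C3 = "snd ` psub F ws3"
  let ?c = "\<lambda>P. snd ` psub F P"
  have al: "rpath F F al x s" "set al \<subseteq> set ws1" "t \<notin> set al" "pe al \<subseteq> pe ws1" "?c al \<subseteq> ?C1"
    "length al = Suc p"
  proof -
    have pe: "pe al \<subseteq> pe ws1" using pe_take_sub by (simp add: al_def)
    have ad: "al \<noteq> []" "distinct al" using W1 by (auto simp: al_def)
    have h1: "hd al = x" using p by (simp add: al_def hd_rev take_Suc_conv_app_nth)
    have h2: "last al = s" using W1 by (simp add: al_def last_rev)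
    from rpath_sub[OF w1 ad(2,1) pe] show "rpath F F al x s"
      using h1 h2 by simp
    show "set al \<subseteq> set ws1" by (auto simp: al_def dest: in_set_takeD)
    show "t \<notin> set al" using not_in_take[OF W1(1) p1] W1 by (simp add: al_def)
    show "pe al \<subseteq> pe ws1" by (rule pe)
    show "?c al \<subseteq> ?C1" using pe by (rule col_sub)
    show "length al = Suc p" using p by (simp add: al_def)
  qed
  have be: "rpath F F be x t" "set be \<subseteq> set ws1" "s \<notin> set be" "pe be \<subseteq> pe ws1" "?c be \<subseteq> ?C1"
    "length be = length ws1 - p"
  proof -
    have pe: "pe be \<subseteq> pe ws1" using pe_drop_sub by (simp add: be_def)
    have "be \<noteq> []" "distinct be" using W1 p by (auto simp: be_def)
    from rpath_sub[OF w1 this(2,1) pe] show "rpath F F be x t"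
      using p W1 by (simp add: be_def hd_drop_conv_nth)
    show "set be \<subseteq> set ws1" by (auto simp: be_def dest: in_set_dropD)
    show "s \<notin> set be" using not_in_drop[OF W1(1) p0 p(1)] W1 by (simp add: be_def)
    show "pe be \<subseteq> pe ws1" by (rule pe)
    show "?c be \<subseteq> ?C1" using pe by (rule col_sub)
    show "length be = length ws1 - p" by (simp add: be_def)
  qed
  have ga: "rpath F F ga s y" "set ga \<subseteq> set ws2" "t \<notin> set ga" "pe ga \<subseteq> pe ws2" "?c ga \<subseteq> ?C2"
    "length ga = Suc q"
  proof -
    have pe: "pe ga \<subseteq> pe ws2" using pe_take_sub by (simp add: ga_def)
    have ad: "ga \<noteq> []" "distinct ga" using W2 by (auto simp: ga_def)
    have h1: "hd ga = s" using W2 by (simp add: ga_def)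
    have h2: "last ga = y" using q by (simp add: ga_def take_Suc_conv_app_nth)
    from rpath_sub[OF w2 ad(2,1) pe] show "rpath F F ga s y"
      using h1 h2 by simp
    show "set ga \<subseteq> set ws2" by (auto simp: ga_def dest: in_set_takeD)
    show "t \<notin> set ga" using not_in_take[OF W2(1) q1] W2 by (simp add: ga_def)
    show "pe ga \<subseteq> pe ws2" by (rule pe)
    show "?c ga \<subseteq> ?C2" using pe by (rule col_sub)
    show "length ga = Suc q" using q by (simp add: ga_def)
  qed
  have de: "rpath F F de t y" "set de \<subseteq> set ws2" "s \<notin> set de" "pe de \<subseteq> pe ws2" "?c de \<subseteq> ?C2"
    "length de = length ws2 - q"
  proof -
    have pe: "pe de \<subseteq> pe ws2" using pe_drop_sub by (simp add: de_def)
    have "de \<noteq> []" "distinct de" using W2 q by (auto simp: de_def)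
    from rpath_sub[OF w2 this(2,1) pe] show "rpath F F de t y"
      using q W2 by (simp add: de_def hd_rev last_rev hd_drop_conv_nth)
    show "set de \<subseteq> set ws2" by (auto simp: de_def dest: in_set_dropD)
    show "s \<notin> set de" using not_in_drop[OF W2(1) q0 q(1)] W2 by (simp add: de_def)
    show "pe de \<subseteq> pe ws2" by (rule pe)
    show "?c de \<subseteq> ?C2" using pe by (rule col_sub)
    show "length de = length ws2 - q" by (simp add: de_def)
  qed
  have ab: "?c al \<inter> ?c be = {}"
  proof (rule ccontr)
    assume "\<not> ?thesis"
    then obtain c where c: "c \<in> ?c al" "c \<in> ?c be" by blast
    obtain p1 where p1: "p1 \<in> psub F al" "snd p1 = c" using c(1) by (metis imageE)
    obtain p2 where p2: "p2 \<in> psub F be" "snd p2 = c" using c(2) by (metis imageE)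
    have s1: "psub F al \<subseteq> psub F ws1" using al(4) by (rule psub_mono)
    have s2: "psub F be \<subseteq> psub F ws1" using be(4) by (rule psub_mono)
    have "inj_on snd (psub F ws1)" using w1 by (simp add: rpath_def)
    then have "p1 = p2" using p1 p2 s1 s2 by (metis inj_onD subsetD)
    have "fst p1 \<in> pe al" using p1 by (simp add: psub_def)
    then have f1: "fst p1 \<in> pe (take (Suc p) ws1)" by (simp add: al_def)
    have "fst p2 \<in> pe be" using p2 by (simp add: psub_def)
    then have f2: "fst p1 \<in> pe (drop p ws1)" using \<open>p1 = p2\<close> by (simp add: be_def)
    show False using pe_take_drop_disj[OF W1(1) p(1)] f1 f2 by blast
  qed
  have "finite ?C1" using psub_finite[OF cg, of ws1] by simp
  then have fin: "finite (?C1 \<inter> ?C2)" by simp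
  have cases: "?c al \<inter> ?C2 = {} \<or> ?c be \<inter> ?C2 = {}"
  proof (rule ccontr)
    assume "\<not> ?thesis"
    then obtain c1 c2 where c1: "c1 \<in> ?c al" "c1 \<in> ?C2" and c2: "c2 \<in> ?c be" "c2 \<in> ?C2"
      by blast
    have i1: "c1 \<in> ?C1 \<inter> ?C2" using c1 al(5) by blast
    have i2: "c2 \<in> ?C1 \<inter> ?C2" using c2 be(5) by blast
    have "card (?C1 \<inter> ?C2) \<le> Suc 0" using c12 by simp
    then have "\<forall>a\<in>?C1 \<inter> ?C2. \<forall>b\<in>?C1 \<inter> ?C2. a = b"
      using card_le_Suc0_iff_eq[OF fin] by blast
    then have "c1 = c2" using i1 i2 by blast
    then show False using ab c1(1) c2(1) by blast
  qed
  have w3r: "rpath F F (rev ws3) t s" using rpath_rev[OF w3] .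
  have two: "\<exists>P1 P2. rpath F F P1 x y \<and> pe P1 \<subseteq> pe ws1 \<union> pe ws2 \<union> pe ws3 \<and>
             rpath F F P2 x y \<and> pe P2 \<subseteq> pe ws1 \<union> pe ws2 \<union> pe ws3 \<and>
             (even (length P1) \<longleftrightarrow> \<not> even (length P2))"
    using cases
  proof
    assume ca: "?c al \<inter> ?C2 = {}"
    have dA: "set al \<inter> set ga \<subseteq> {s}" using al(2,3) ga(2) i12 by blast
    have cA: "?c al \<inter> ?c ga = {}" using ca ga(5) by blast
    note A = cat[OF al(1) ga(1) dA cA]
    have dC1: "set al \<inter> set ws3 \<subseteq> {s}" using al(2,3) i13 by blast
    have cC1: "?c al \<inter> ?C3 = {}" using al(5) c13 by blast
    note C1 = cat[OF al(1) w3 dC1 cC1]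
    have C1s: "set (al @ tl ws3) = set al \<union> set ws3" "?c (al @ tl ws3) = ?c al \<union> ?C3"
      using C1 by simp_all
    have dC: "set (al @ tl ws3) \<inter> set de \<subseteq> {t}" unfolding C1s using al(2,3) de(2,3) i12 i23 by blast
    have cC: "?c (al @ tl ws3) \<inter> ?c de = {}" unfolding C1s using ca de(5) c23 by blast
    have C1r: "rpath F F (al @ tl ws3) x t" using C1 by simp
    note C = cat[OF C1r de(1) dC cC]
    show ?thesis
    proof (intro exI conjI)
      show "rpath F F (al @ tl ga) x y" using A by simp
      show "pe (al @ tl ga) \<subseteq> pe ws1 \<union> pe ws2 \<union> pe ws3" using A al(4) ga(4) by auto
      show "rpath F F ((al @ tl ws3) @ tl de) x y" using C by simp
      show "pe ((al @ tl ws3) @ tl de) \<subseteq> pe ws1 \<union> pe ws2 \<union> pe ws3" using C C1 al(4) de(4) by auto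
      have l1: "length (al @ tl ga) + 1 = Suc p + Suc q" using A al(6) ga(6) by simp
      have l2: "length (al @ tl ws3) + 1 = Suc p + length ws3" using C1 al(6) W3(2) by simp
      have l3: "length ((al @ tl ws3) @ tl de) + 1 = length (al @ tl ws3) + (length ws2 - q)" using C de(6) by simp
      have "length (al @ tl ga) + length ((al @ tl ws3) @ tl de) + 2 = 2 * Suc p + length ws2 + length ws3"
        using l1 l2 l3 q(1) p(1) by arith
      then show "even (length (al @ tl ga)) \<longleftrightarrow> \<not> even (length ((al @ tl ws3) @ tl de))"
        using o23 by presburger
    qed
  next
    assume cb: "?c be \<inter> ?C2 = {}"
    have dB: "set be \<inter> set de \<subseteq> {t}" using be(2,3) de(2) i12 by blast
    have cB: "?c be \<inter> ?c de = {}" using cb de(5) by blast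
    note B = cat[OF be(1) de(1) dB cB]
    have r3: "?c (rev ws3) = ?C3" by (simp add: psub_def)
    have dD1: "set be \<inter> set (rev ws3) \<subseteq> {t}" using be(2,3) i13 by auto
    have cD1: "?c be \<inter> ?c (rev ws3) = {}" unfolding r3 using be(5) c13 by blast
    note D1 = cat[OF be(1) w3r dD1 cD1]
    have D1s: "set (be @ tl (rev ws3)) = set be \<union> set ws3" "?c (be @ tl (rev ws3)) = ?c be \<union> ?C3"
      using D1 r3 by simp_all
    have dD: "set (be @ tl (rev ws3)) \<inter> set ga \<subseteq> {s}" unfolding D1s using be(2,3) ga(2,3) i12 i23 by blast
    have cD: "?c (be @ tl (rev ws3)) \<inter> ?c ga = {}" unfolding D1s using cb ga(5) c23 by blast
    have D1r: "rpath F F (be @ tl (rev ws3)) x s" using D1 by simp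
    note D = cat[OF D1r ga(1) dD cD]
    show ?thesis
    proof (intro exI conjI)
      show "rpath F F (be @ tl de) x y" using B by simp
      show "pe (be @ tl de) \<subseteq> pe ws1 \<union> pe ws2 \<union> pe ws3" using B be(4) de(4) by auto
      show "rpath F F ((be @ tl (rev ws3)) @ tl ga) x y" using D by simp
      show "pe ((be @ tl (rev ws3)) @ tl ga) \<subseteq> pe ws1 \<union> pe ws2 \<union> pe ws3" using D D1 be(4) ga(4) by auto
      have l1: "length (be @ tl de) + 1 = (length ws1 - p) + (length ws2 - q)" using B be(6) de(6) by simp
      have l2: "length (be @ tl (rev ws3)) + 1 = (length ws1 - p) + length ws3" using D1 be(6) W3(2) by simp
      have l3: "length ((be @ tl (rev ws3)) @ tl ga) + 1 = length (be @ tl (rev ws3)) + Suc q" using D ga(6) by simp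
      have "length (be @ tl de) + length ((be @ tl (rev ws3)) @ tl ga) + 2
          = 2 * (length ws1 - p) + length ws2 + length ws3"
        using l1 l2 l3 q(1) p(1) by arith
      then show "even (length (be @ tl de)) \<longleftrightarrow> \<not> even (length ((be @ tl (rev ws3)) @ tl ga))"
        using o23 by presburger
    qed
  qed
  then obtain P1 P2 where P: "rpath F F P1 x y" "pe P1 \<subseteq> pe ws1 \<union> pe ws2 \<union> pe ws3"
    "rpath F F P2 x y" "pe P2 \<subseteq> pe ws1 \<union> pe ws2 \<union> pe ws3" "even (length P1) \<longleftrightarrow> \<not> even (length P2)"
    by blast
  show ?thesis
  proof (cases "even (length P1) \<longleftrightarrow> b")
    case True then show ?thesis using P by blast
  next
    case False then show ?thesis using P by (intro exI[of _ P2]) blast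
  qed
qed


lemma rpath_ends: "rpath F W P x y \<Longrightarrow> x \<in> set P \<and> y \<in> set P"
  unfolding rpath_def by (metis hd_in_set last_in_set)

lemma theta_pair:
  assumes nre: "nre F" and cg: "cgraph F"
    and wa: "rpath F F A s t" and wb: "rpath F F B s t" and st: "s \<noteq> t"
    and dis: "set A \<inter> set B \<subseteq> {s, t}" and cd: "snd ` psub F A \<inter> snd ` psub F B = {}"
    and x: "x \<in> set A \<union> set B" and y: "y \<in> set A \<union> set B" and xy: "x \<noteq> y"
  shows "\<exists>P. rpath F F P x y \<and> pe P \<subseteq> pe A \<union> pe B \<and> (even (length P) \<longleftrightarrow> b)"
proof -
  have WA: "distinct A" "A \<noteq> []" "hd A = s" "last A = t" "pe A \<subseteq> uedges F" "inj_on snd (psub F A)"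
    using wa by (auto simp: rpath_def)
  have WB: "distinct B" "B \<noteq> []" "hd B = s" "last B = t" "pe B \<subseteq> uedges F" "inj_on snd (psub F B)"
    using wb by (auto simp: rpath_def)
  obtain vs where vs: "distinct vs" "length vs + 2 = length A + length B"
     "pe (vs @ [hd vs]) = pe A \<union> pe B" "set vs = set A \<union> set B"
    using two_path_cycle[OF WA(1) WB(1) WA(2) WB(2) WA(3) WB(3) WA(4) WB(4) st dis] by blast
  have "odd (length A + length B)"
    using two_paths_odd[OF nre cg WA(1) WB(1) WA(2) WB(2) WA(3) WB(3) WA(4) WB(4) st dis WA(5) WB(5) WA(6) WB(6) cd] .
  then have od: "odd (length vs)" using vs(2) by presburger
  obtain P where P: "distinct P" "P \<noteq> []" "hd P = x" "last P = y"
      "pe P \<subseteq> pe (vs @ [hd vs])" "even (length P) \<longleftrightarrow> b"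
    using cycle_arcs[OF vs(1) od _ _ xy, of b] x y vs(4) by auto
  have "psub F P \<subseteq> psub F A \<union> psub F B" using P(5) vs(3) unfolding psub_def by auto
  moreover have "inj_on snd (psub F A \<union> psub F B)" using WA(6) WB(6) cd by (auto simp: inj_on_Un)
  ultimately have "inj_on snd (psub F P)" by (rule inj_on_subset[rotated])
  moreover have "pe P \<subseteq> pe A \<union> pe B" using P(5) vs(3) by simp
  moreover have "pe P \<subseteq> uedges F" using calculation(2) WA(5) WB(5) by blast
  ultimately have "rpath F F P x y" "pe P \<subseteq> pe A \<union> pe B" using P unfolding rpath_def by auto
  then show ?thesis using P(6) by blast
qed

lemma bad_core:
  assumes nre: "nre F" and cg: "cgraph F"
   and w1: "rpath F F ws1 s t" and w2: "rpath F F ws2 s t" and w3: "rpath F F ws3 s t" and st: "s \<noteq> t"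
   and i12: "set ws1 \<inter> set ws2 \<subseteq> {s,t}" and i13: "set ws1 \<inter> set ws3 \<subseteq> {s,t}"
   and i23: "set ws2 \<inter> set ws3 \<subseteq> {s,t}"
   and c13: "snd ` psub F ws1 \<inter> snd ` psub F ws3 = {}" and c23: "snd ` psub F ws2 \<inter> snd ` psub F ws3 = {}"
   and c12: "card (snd ` psub F ws1 \<inter> snd ` psub F ws2) \<le> 1"
   and x: "x \<in> set ws1 \<union> set ws2 \<union> set ws3" and y: "y \<in> set ws1 \<union> set ws2 \<union> set ws3" and xy: "x \<noteq> y"
  shows "\<exists>P. rpath F F P x y \<and> pe P \<subseteq> pe ws1 \<union> pe ws2 \<union> pe ws3 \<and> (even (length P) \<longleftrightarrow> b)"
proof -
  have W1: "distinct ws1" "ws1 \<noteq> []" "hd ws1 = s" "last ws1 = t" "pe ws1 \<subseteq> uedges F" "inj_on snd (psub F ws1)"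
    using w1 by (auto simp: rpath_def)
  have W2: "distinct ws2" "ws2 \<noteq> []" "hd ws2 = s" "last ws2 = t" "pe ws2 \<subseteq> uedges F" "inj_on snd (psub F ws2)"
    using w2 by (auto simp: rpath_def)
  have W3: "distinct ws3" "ws3 \<noteq> []" "hd ws3 = s" "last ws3 = t" "pe ws3 \<subseteq> uedges F" "inj_on snd (psub F ws3)"
    using w3 by (auto simp: rpath_def)
  have st3: "s \<in> set ws3" "t \<in> set ws3" using rpath_ends[OF w3] by auto
  have o13: "odd (length ws1 + length ws3)"
    using two_paths_odd[OF nre cg W1(1) W3(1) W1(2) W3(2) W1(3) W3(3) W1(4) W3(4) st i13 W1(5) W3(5) W1(6) W3(6) c13] .
  have o23: "odd (length ws2 + length ws3)"
    using two_paths_odd[OF nre cg W2(1) W3(1) W2(2) W3(2) W2(3) W3(3) W2(4) W3(4) st i23 W2(5) W3(5) W2(6) W3(6) c23] .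
  consider "x \<in> set ws1 \<union> set ws3 \<and> y \<in> set ws1 \<union> set ws3"
    | "x \<in> set ws2 \<union> set ws3 \<and> y \<in> set ws2 \<union> set ws3"
    | "x \<in> set ws1 \<and> x \<notin> set ws3 \<and> y \<in> set ws2 \<and> y \<notin> set ws3"
    | "x \<in> set ws2 \<and> x \<notin> set ws3 \<and> y \<in> set ws1 \<and> y \<notin> set ws3"
    using x y by blast
  then show ?thesis
  proof cases
    case 1
    then show ?thesis using theta_pair[OF nre cg w1 w3 st i13 c13 _ _ xy, of b] by blast
  next
    case 2
    then show ?thesis using theta_pair[OF nre cg w2 w3 st i23 c23 _ _ xy, of b] by blast
  next
    case 3
    then have "x \<notin> {s,t}" "y \<notin> {s,t}" using st3 by auto
    then show ?thesis using cross[OF cg w1 w2 w3 st i12 i13 i23 c13 c23 c12 o23, of x y b] 3 by blast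
  next
    case 4
    then have xs: "x \<notin> {s,t}" "y \<notin> {s,t}" using st3 by auto
    have i21: "set ws2 \<inter> set ws1 \<subseteq> {s,t}" using i12 by blast
    have c21: "card (snd ` psub F ws2 \<inter> snd ` psub F ws1) \<le> 1" using c12 by (simp add: Int_commute)
    obtain P where "rpath F F P x y" "pe P \<subseteq> pe ws2 \<union> pe ws1 \<union> pe ws3" "even (length P) \<longleftrightarrow> b"
      using cross[OF cg w2 w1 w3 st i21 i23 i13 c23 c13 c21 o13, of x y b] 4 xs by blast
    then show ?thesis by blast
  qed
qed

lemma three_colors:
  assumes f: "finite C1" "finite C2" "finite C3"
    and e: "card (C1 \<union> C2 \<union> C3) + 1 = card C1 + card C2 + card C3"
    and ne: "C1 \<inter> C2 \<noteq> {}"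
  shows "C1 \<inter> C3 = {} \<and> C2 \<inter> C3 = {} \<and> card (C1 \<inter> C2) \<le> 1"
proof -
  have a: "card C1 + card C2 = card (C1 \<union> C2) + card (C1 \<inter> C2)" using card_Un_Int[OF f(1,2)] .
  have b: "card (C1 \<union> C2) + card C3 = card (C1 \<union> C2 \<union> C3) + card ((C1 \<union> C2) \<inter> C3)"
    using card_Un_Int[of "C1 \<union> C2" C3] f by simp
  have "card (C1 \<inter> C2) \<ge> 1" using ne f by (simp add: Suc_le_eq card_gt_0_iff)
  then have "card ((C1 \<union> C2) \<inter> C3) = 0" "card (C1 \<inter> C2) \<le> 1" using a b e by linarith+
  moreover have "finite ((C1 \<union> C2) \<inter> C3)" using f by simp
  ultimately show ?thesis by auto
qed


lemma path_list:
  assumes "path_between P s t"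
  obtains ws where "distinct ws" "length ws \<ge> 2" "hd ws = s" "last ws = t" "uedges P = pe ws" "cgraph P"
  using assms unfolding path_between_def pe_def by blast

lemma uedges_mono: "A \<subseteq> B \<Longrightarrow> uedges A \<subseteq> uedges B"
  unfolding uedges_def by blast

lemma path_facts:
  assumes cg: "cgraph F" and PF: "Pi \<subseteq> F" and rb: "rainbow Pi" and cgP: "cgraph Pi"
    and ws: "distinct ws" "length ws \<ge> 2" "hd ws = s" "last ws = t" "uedges Pi = pe ws"
  shows "rpath F F ws s t \<and> psub F ws = Pi \<and> set ws = verts Pi"
proof -
  have ps: "psub F ws = Pi"
  proof
    show "psub F ws \<subseteq> Pi" using psub_sub[OF cg PF] ws(5) by simp
    show "Pi \<subseteq> psub F ws" using PF ws(5) unfolding psub_def uedges_def by auto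
  qed
  have inj: "inj_on snd Pi" using rb rainbow_inj[OF cgraph_finite[OF cgP]] by simp
  have "pe ws \<subseteq> uedges F" using uedges_mono[OF PF] ws(5) by simp
  then have r: "rpath F F ws s t" using ws inj ps unfolding rpath_def by auto
  have "set ws = \<Union> (pe ws)" using set_sub_pe[OF ws(2)] pe_sub_set[of ws] by blast
  then have "set ws = verts Pi" using ws(5) by (simp add: verts_uedges)
  then show ?thesis using r ps by blast
qed

lemma bad_part:
  assumes nre: "nre F" and cg: "cgraph F" and HF: "H \<subseteq> F" and bp: "bad_piece H"
    and x: "x \<in> verts H" and y: "y \<in> verts H" and xy: "x \<noteq> y"
  shows "\<exists>P. rpath F H P x y \<and> (even (length P) \<longleftrightarrow> b)"
proof -
  have "\<exists>P1 P2 P3 s t. theta_parts P1 P2 P3 s t \<and> H = P1 \<union> P2 \<union> P3 \<and>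
        rainbow P1 \<and> rainbow P2 \<and> rainbow P3" using bp by (simp add: bad_piece_def)
  then obtain P1 P2 P3 s t where th: "theta_parts P1 P2 P3 s t" and H: "H = P1 \<union> P2 \<union> P3"
    and rb: "rainbow P1" "rainbow P2" "rainbow P3"
    by (elim exE conjE)
  have ar: "card (colors H) + 1 = card H" using bp by (simp add: bad_piece_def almost_rainbow_def)
  have st: "s \<noteq> t" using th by (simp add: theta_parts_def)
  have pb: "path_between P1 s t" "path_between P2 s t" "path_between P3 s t"
    using th by (simp_all add: theta_parts_def)
  have vi: "verts P1 \<inter> verts P2 \<subseteq> {s,t}" "verts P1 \<inter> verts P3 \<subseteq> {s,t}" "verts P2 \<inter> verts P3 \<subseteq> {s,t}"
    using th by (simp_all add: theta_parts_def)
  have ui: "uedges P1 \<inter> uedges P2 = {}" "uedges P1 \<inter> uedges P3 = {}" "uedges P2 \<inter> uedges P3 = {}"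
    using th by (simp_all add: theta_parts_def)
  have PF: "P1 \<subseteq> F" "P2 \<subseteq> F" "P3 \<subseteq> F" using H HF by auto
  obtain ws1 where ws1: "distinct ws1" "length ws1 \<ge> 2" "hd ws1 = s" "last ws1 = t" "uedges P1 = pe ws1" "cgraph P1"
    using path_list[OF pb(1)] by blast
  obtain ws2 where ws2: "distinct ws2" "length ws2 \<ge> 2" "hd ws2 = s" "last ws2 = t" "uedges P2 = pe ws2" "cgraph P2"
    using path_list[OF pb(2)] by blast
  obtain ws3 where ws3: "distinct ws3" "length ws3 \<ge> 2" "hd ws3 = s" "last ws3 = t" "uedges P3 = pe ws3" "cgraph P3"
    using path_list[OF pb(3)] by blast
  note f1 = path_facts[OF cg PF(1) rb(1) ws1(6) ws1(1-5)]
  note f2 = path_facts[OF cg PF(2) rb(2) ws2(6) ws2(1-5)]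
  note f3 = path_facts[OF cg PF(3) rb(3) ws3(6) ws3(1-5)]
  have w: "rpath F F ws1 s t" "rpath F F ws2 s t" "rpath F F ws3 s t" using f1 f2 f3 by blast+
  have ps: "psub F ws1 = P1" "psub F ws2 = P2" "psub F ws3 = P3" using f1 f2 f3 by blast+
  have sv: "set ws1 = verts P1" "set ws2 = verts P2" "set ws3 = verts P3" using f1 f2 f3 by blast+
  have i: "set ws1 \<inter> set ws2 \<subseteq> {s,t}" "set ws1 \<inter> set ws3 \<subseteq> {s,t}" "set ws2 \<inter> set ws3 \<subseteq> {s,t}"
    "set ws2 \<inter> set ws1 \<subseteq> {s,t}" "set ws3 \<inter> set ws1 \<subseteq> {s,t}" "set ws3 \<inter> set ws2 \<subseteq> {s,t}"
    using vi sv by blast+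
  define C1 where "C1 = snd ` P1"
  define C2 where "C2 = snd ` P2"
  define C3 where "C3 = snd ` P3"
  have fin: "finite C1" "finite C2" "finite C3"
    using ws1(6) ws2(6) ws3(6) cgraph_finite by (auto simp: C1_def C2_def C3_def)
  have cc: "card C1 = card P1" "card C2 = card P2" "card C3 = card P3"
    using rb by (simp_all add: rainbow_def colors_def C1_def C2_def C3_def)
  have dj: "P1 \<inter> P2 = {}" "P1 \<inter> P3 = {}" "P2 \<inter> P3 = {}"
    using ui unfolding uedges_def by (metis disjoint_iff image_eqI)+
  have fP: "finite P1" "finite P2" "finite P3" using ws1(6) ws2(6) ws3(6) cgraph_finite by auto
  have "card H = card P1 + card P2 + card P3"
  proof -
    have "card (P1 \<union> P2) = card P1 + card P2" using dj fP by (simp add: card_Un_disjoint)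
    moreover have "card (P1 \<union> P2 \<union> P3) = card (P1 \<union> P2) + card P3"
      using dj fP by (intro card_Un_disjoint) auto
    ultimately show ?thesis using H by simp
  qed
  moreover have "colors H = C1 \<union> C2 \<union> C3" using H by (simp add: colors_def C1_def C2_def C3_def image_Un)
  ultimately have e: "card (C1 \<union> C2 \<union> C3) + 1 = card C1 + card C2 + card C3" using ar cc by simp
  have col: "snd ` psub F ws1 = C1" "snd ` psub F ws2 = C2" "snd ` psub F ws3 = C3"
    using ps by (simp_all add: C1_def C2_def C3_def)
  have vH: "verts H = set ws1 \<union> set ws2 \<union> set ws3" using H sv by (simp add: verts_Un)
  have xs: "x \<in> set ws1 \<union> set ws2 \<union> set ws3" "y \<in> set ws1 \<union> set ws2 \<union> set ws3" using x y vH by auto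
  have "\<exists>P. rpath F F P x y \<and> pe P \<subseteq> pe ws1 \<union> pe ws2 \<union> pe ws3 \<and> (even (length P) \<longleftrightarrow> b)"
  proof -
    have xs': "x \<in> set ws1 \<union> set ws3 \<union> set ws2" "y \<in> set ws1 \<union> set ws3 \<union> set ws2"
      "x \<in> set ws2 \<union> set ws3 \<union> set ws1" "y \<in> set ws2 \<union> set ws3 \<union> set ws1" using xs by auto
    have U: "pe ws1 \<union> pe ws3 \<union> pe ws2 = pe ws1 \<union> pe ws2 \<union> pe ws3"
      "pe ws2 \<union> pe ws3 \<union> pe ws1 = pe ws1 \<union> pe ws2 \<union> pe ws3" by auto
    consider "C1 \<inter> C3 = {} \<and> C2 \<inter> C3 = {} \<and> card (C1 \<inter> C2) \<le> 1"
      | "C1 \<inter> C2 = {} \<and> C3 \<inter> C2 = {} \<and> card (C1 \<inter> C3) \<le> 1"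
      | "C2 \<inter> C1 = {} \<and> C3 \<inter> C1 = {} \<and> card (C2 \<inter> C3) \<le> 1"
    proof -
      have e2: "card (C1 \<union> C3 \<union> C2) + 1 = card C1 + card C3 + card C2" using e by (simp add: Un_ac add_ac)
      have e3: "card (C2 \<union> C3 \<union> C1) + 1 = card C2 + card C3 + card C1" using e by (simp add: Un_ac add_ac)
      show thesis
      proof (cases "C1 \<inter> C2 \<noteq> {}")
        case True then show thesis using three_colors[OF fin e True] that(1) by blast
      next
        case F12: False
        show thesis
        proof (cases "C1 \<inter> C3 \<noteq> {}")
          case True then show thesis using three_colors[OF fin(1,3,2) e2 True] that(2) by blast
        next
          case F13: False
          show thesis
          proof (cases "C2 \<inter> C3 \<noteq> {}")
            case True then show thesis using three_colors[OF fin(2,3,1) e3 True] that(3) by blast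
          next
            case False then show thesis using F12 F13 that(1) by simp
          qed
        qed
      qed
    qed
    then show ?thesis
    proof cases
      case 1
      then have a: "snd ` psub F ws1 \<inter> snd ` psub F ws3 = {}" "snd ` psub F ws2 \<inter> snd ` psub F ws3 = {}"
        "card (snd ` psub F ws1 \<inter> snd ` psub F ws2) \<le> 1" using col by simp_all
      show ?thesis using bad_core[OF nre cg w(1) w(2) w(3) st i(1) i(2) i(3) a xs(1) xs(2) xy] .
    next
      case 2
      then have a: "snd ` psub F ws1 \<inter> snd ` psub F ws2 = {}" "snd ` psub F ws3 \<inter> snd ` psub F ws2 = {}"
        "card (snd ` psub F ws1 \<inter> snd ` psub F ws3) \<le> 1" using col by simp_all
      show ?thesis using bad_core[OF nre cg w(1) w(3) w(2) st i(2) i(1) i(6) a xs'(1) xs'(2) xy] U(1) by simp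
    next
      case 3
      then have a: "snd ` psub F ws2 \<inter> snd ` psub F ws1 = {}" "snd ` psub F ws3 \<inter> snd ` psub F ws1 = {}"
        "card (snd ` psub F ws2 \<inter> snd ` psub F ws3) \<le> 1" using col by simp_all
      show ?thesis using bad_core[OF nre cg w(2) w(3) w(1) st i(3) i(4) i(5) a xs'(3) xs'(4) xy] U(2) by simp
    qed
  qed
  then obtain P where P: "rpath F F P x y" "pe P \<subseteq> pe ws1 \<union> pe ws2 \<union> pe ws3" "even (length P) \<longleftrightarrow> b"
    by blast
  have "uedges H = pe ws1 \<union> pe ws2 \<union> pe ws3" using H ws1(5) ws2(5) ws3(5) by (simp add: uedges_Un)
  then have "rpath F H P x y" using P unfolding rpath_def by auto
  then show ?thesis using P(3) by blast
qed


section \<open>Invariant\<close>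

definition Inv :: "('v, 'c) cgraph \<Rightarrow> ('v \<Rightarrow> bool) \<Rightarrow> ('v, 'c) cgraph \<Rightarrow> bool" where
  "Inv F N W \<longleftrightarrow> (\<forall>x\<in>verts W. \<forall>y\<in>verts W. x \<noteq> y \<longrightarrow> (\<exists>P. rpath F W P x y) \<and>
      (N x \<longrightarrow> (\<forall>b. \<exists>P. rpath F W P x y \<and> (even (length P) \<longleftrightarrow> b))))"

lemma Inv_mono: "Inv F N W \<Longrightarrow> (\<And>x. x \<in> verts W \<Longrightarrow> N' x \<Longrightarrow> N x) \<Longrightarrow> Inv F N' W"
  unfolding Inv_def by blast

lemma Inv_empty: "Inv F N {}"
  unfolding Inv_def by (simp add: verts_def)

lemma glue_dir:
  assumes cg: "cgraph F" and W1: "W1 \<subseteq> F" and W2: "W2 \<subseteq> F"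
    and I1: "Inv F N1 W1" and I2: "Inv F N2 W2"
    and a: "verts W1 \<inter> verts W2 = {a}" and cd: "snd ` W1 \<inter> snd ` W2 = {}"
    and x: "x \<in> verts W1" "x \<notin> verts W2" and y: "y \<in> verts W2" "y \<notin> verts W1"
  shows "(\<exists>P. rpath F (W1 \<union> W2) P x y) \<and>
      (N1 x \<longrightarrow> (\<forall>b. \<exists>P. rpath F (W1 \<union> W2) P x y \<and> (even (length P) \<longleftrightarrow> b)))"
proof -
  have a1: "a \<in> verts W1" "a \<in> verts W2" using a by auto
  have xa: "x \<noteq> a" using x a1 by auto
  have ay: "a \<noteq> y" using y a1 by auto
  obtain P2 where P2: "rpath F W2 P2 a y" using I2 a1(2) y(1) ay unfolding Inv_def by blast
  have s2: "set P2 \<subseteq> verts W2" using rpath_set[OF P2 ay] .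
  have main: "rpath F (W1 \<union> W2) (P1 @ tl P2) x y \<and> length (P1 @ tl P2) + 1 = length P1 + length P2"
    if P1: "rpath F W1 P1 x a" for P1
  proof -
    have "set P1 \<subseteq> verts W1" using rpath_set[OF P1 xa] .
    then have "set P1 \<inter> set P2 \<subseteq> {a}" using s2 a by blast
    from rpath_concat[OF cg W1 W2 P1 P2 this cd] show ?thesis .
  qed
  obtain P1 where P1: "rpath F W1 P1 x a" using I1 a1(1) x(1) xa unfolding Inv_def by blast
  have ex: "\<exists>P. rpath F (W1 \<union> W2) P x y" using main[OF P1] by blast
  have "\<forall>b. \<exists>P. rpath F (W1 \<union> W2) P x y \<and> (even (length P) \<longleftrightarrow> b)" if N: "N1 x"
  proof
    fix b
    obtain Q where Q: "rpath F W1 Q x a" "even (length Q) \<longleftrightarrow> (b \<longleftrightarrow> even (Suc (length P2)))"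
      using I1 a1(1) x(1) xa N unfolding Inv_def by blast
    have m: "rpath F (W1 \<union> W2) (Q @ tl P2) x y" "length (Q @ tl P2) + 1 = length Q + length P2"
      using main[OF Q(1)] by auto
    have "even (length (Q @ tl P2)) \<longleftrightarrow> (even (length Q) \<longleftrightarrow> even (Suc (length P2)))"
      using m(2) by presburger
    then have "even (length (Q @ tl P2)) \<longleftrightarrow> b" using Q(2) by blast
    then show "\<exists>P. rpath F (W1 \<union> W2) P x y \<and> (even (length P) \<longleftrightarrow> b)" using m(1) by blast
  qed
  then show ?thesis using ex by blast
qed

lemma Inv_glue:
  assumes cg: "cgraph F" and W1: "W1 \<subseteq> F" and W2: "W2 \<subseteq> F"
    and I1: "Inv F N1 W1" and I2: "Inv F N2 W2"
    and a: "verts W1 \<inter> verts W2 = {a}" and cd: "snd ` W1 \<inter> snd ` W2 = {}"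
  shows "Inv F (\<lambda>x. N1 x \<and> N2 x) (W1 \<union> W2)"
  unfolding Inv_def
proof (intro ballI impI)
  fix x y assume x: "x \<in> verts (W1 \<union> W2)" and y: "y \<in> verts (W1 \<union> W2)" and xy: "x \<noteq> y"
  have u1: "uedges W1 \<subseteq> uedges (W1 \<union> W2)" "uedges W2 \<subseteq> uedges (W1 \<union> W2)" by (auto simp: uedges_Un)
  consider "x \<in> verts W1 \<and> y \<in> verts W1" | "x \<in> verts W2 \<and> y \<in> verts W2"
    | "x \<in> verts W1 \<and> x \<notin> verts W2 \<and> y \<in> verts W2 \<and> y \<notin> verts W1"
    | "x \<in> verts W2 \<and> x \<notin> verts W1 \<and> y \<in> verts W1 \<and> y \<notin> verts W2"
    using x y by (auto simp: verts_Un)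
  then show "(\<exists>P. rpath F (W1 \<union> W2) P x y) \<and>
      (N1 x \<and> N2 x \<longrightarrow> (\<forall>b. \<exists>P. rpath F (W1 \<union> W2) P x y \<and> (even (length P) \<longleftrightarrow> b)))"
  proof cases
    case 1
    then show ?thesis using I1 xy rpath_mono[OF _ u1(1)] unfolding Inv_def by meson
  next
    case 2
    then show ?thesis using I2 xy rpath_mono[OF _ u1(2)] unfolding Inv_def by meson
  next
    case 3
    then show ?thesis using glue_dir[OF cg W1 W2 I1 I2 a cd, of x y] by blast
  next
    case 4
    have a': "verts W2 \<inter> verts W1 = {a}" using a by blast
    have cd': "snd ` W2 \<inter> snd ` W1 = {}" using cd by blast
    have "W2 \<union> W1 = W1 \<union> W2" by blast
    then show ?thesis using glue_dir[OF cg W2 W1 I2 I1 a' cd', of x y] 4 by metis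
  qed
qed

lemma part_Inv:
  assumes nre: "nre F" and cg: "cgraph F" and HF: "H \<subseteq> F"
    and ty: "long_rainbow_odd_cycle H \<or> bad_piece H \<or> (rainbow H \<and> is_tree H)"
  shows "Inv F (\<lambda>x. \<not> (rainbow H \<and> is_tree H)) H"
  unfolding Inv_def
proof (intro ballI impI)
  fix x y assume x: "x \<in> verts H" and y: "y \<in> verts H" and xy: "x \<noteq> y"
  show "(\<exists>P. rpath F H P x y) \<and> (\<not> (rainbow H \<and> is_tree H) \<longrightarrow> (\<forall>b. \<exists>P. rpath F H P x y \<and> (even (length P) \<longleftrightarrow> b)))"
  proof (cases "rainbow H \<and> is_tree H")
    case True
    then show ?thesis using tree_part[OF cg HF _ _ x y] by blast
  next
    case False
    then have "long_rainbow_odd_cycle H \<or> bad_piece H" using ty by blast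
    then have par: "\<forall>b. \<exists>P. rpath F H P x y \<and> (even (length P) \<longleftrightarrow> b)"
      using odd_cycle_part[OF cg HF _ x y xy] bad_part[OF nre cg HF _ x y xy] by blast
    then show ?thesis by blast
  qed
qed

lemma no_double1:
  assumes nre: "nre F" and cg: "cgraph F" and UF: "U \<subseteq> F" and QF: "Q \<subseteq> F"
    and IU: "Inv F NU U" and IQ: "Inv F NQ Q" and cd: "snd ` U \<inter> snd ` Q = {}"
    and NQ: "\<forall>x \<in> verts Q \<inter> verts U. NQ x"
    and x: "x \<in> verts Q \<inter> verts U" and y: "y \<in> verts Q \<inter> verts U" and xy: "x \<noteq> y"
  shows False
proof -
  let ?X = "verts Q \<inter> verts U"
  obtain P where "rpath F U P x y" using IU x y xy unfolding Inv_def by blast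
  from min_pair[OF x y xy this] obtain x' y' P' where
    m: "x' \<in> ?X" "y' \<in> ?X" "x' \<noteq> y'" "rpath F U P' x' y'" "set P' \<inter> ?X \<subseteq> {x', y'}" by blast
  have sP: "set P' \<subseteq> verts U" using rpath_set[OF m(4) m(3)] .
  obtain A where A: "rpath F Q A x' y'" "even (length A) \<longleftrightarrow> even (length P')"
    using IQ NQ m(1,2,3) unfolding Inv_def by blast
  have sA: "set A \<subseteq> verts Q" using rpath_set[OF A(1) m(3)] .
  have dis: "set A \<inter> set P' \<subseteq> {x', y'}" using sA sP m(5) by blast
  have pA: "psub F A \<subseteq> Q" using psub_sub[OF cg QF] A(1) by (simp add: rpath_def)
  have pP: "psub F P' \<subseteq> U" using psub_sub[OF cg UF] m(4) by (simp add: rpath_def)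
  have cd': "snd ` psub F A \<inter> snd ` psub F P' = {}" using pA pP cd by blast
  have RA: "distinct A" "A \<noteq> []" "hd A = x'" "last A = y'" "pe A \<subseteq> uedges F" "inj_on snd (psub F A)"
    using A(1) uedges_mono[OF QF] by (auto simp: rpath_def)
  have RP: "distinct P'" "P' \<noteq> []" "hd P' = x'" "last P' = y'" "pe P' \<subseteq> uedges F" "inj_on snd (psub F P')"
    using m(4) uedges_mono[OF UF] by (auto simp: rpath_def)
  have "odd (length A + length P')"
    using two_paths_odd[OF nre cg RA(1) RP(1) RA(2) RP(2) RA(3) RP(3) RA(4) RP(4) m(3) dis RA(5) RP(5) RA(6) RP(6) cd'] .
  then show False using A(2) by presburger
qed


section \<open>Ordering\<close>

definition Ug :: "('v, 'c) cgraph list \<Rightarrow> nat set \<Rightarrow> ('v, 'c) cgraph" where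
  "Ug Gs S = (\<Union>i\<in>S. Gs ! i)"

definition trp :: "('v, 'c) cgraph list \<Rightarrow> nat \<Rightarrow> bool" where
  "trp Gs i \<longleftrightarrow> rainbow (Gs ! i) \<and> is_tree (Gs ! i)"

definition NT :: "('v, 'c) cgraph list \<Rightarrow> nat set \<Rightarrow> 'v \<Rightarrow> bool" where
  "NT Gs S x \<longleftrightarrow> (\<forall>i\<in>S. trp Gs i \<longrightarrow> x \<notin> verts (Gs ! i))"

definition goodl :: "('v, 'c) cgraph list \<Rightarrow> nat list \<Rightarrow> bool" where
  "goodl Gs js \<longleftrightarrow> (\<forall>i. 1 \<le> i \<and> i < length js \<longrightarrow>
     card (verts (\<Union>j<i. Gs ! (js ! j)) \<inter> verts (Gs ! (js ! i))) \<le> 1)"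

definition state :: "('v, 'c) cgraph \<Rightarrow> ('v, 'c) cgraph list \<Rightarrow> nat \<Rightarrow> bool" where
  "state F Gs k \<longleftrightarrow> (\<exists>js cur. length js = k \<and> distinct js \<and> set js \<subseteq> {..<length Gs} \<and> cur \<subseteq> set js
     \<and> goodl Gs js \<and> (\<forall>j<length Gs. j \<notin> set js \<longrightarrow> verts (Gs ! j) \<inter> verts (Ug Gs (set js - cur)) = {})
     \<and> Inv F (NT Gs cur) (Ug Gs cur))"

lemma verts_UN: "verts (\<Union>i\<in>S. f i) = (\<Union>i\<in>S. verts (f i))"
  by (auto simp: verts_def)

lemma snd_UN: "snd ` (\<Union>i\<in>S. f i) = (\<Union>i\<in>S. snd ` (f i))"
  by auto

lemma verts_finite: assumes "cgraph G" shows "finite (verts G)"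
proof -
  have "finite G" using assms by (simp add: cgraph_def)
  moreover have "\<forall>e\<in>fst ` G. finite e"
  proof
    fix e assume "e \<in> fst ` G"
    then obtain a where "(e, a) \<in> G" by force
    then have "card e = 2" using assms unfolding cgraph_def by blast
    then show "finite e" by (intro card_ge_0_finite) simp
  qed
  ultimately show ?thesis by (simp add: verts_def)
qed

lemma fr_facts:
  assumes fr: "frankenstein F Gs"
  shows "cgraph F" "nre F" "\<And>i. i < length Gs \<Longrightarrow> Gs ! i \<subseteq> F"
    "\<And>i. i < length Gs \<Longrightarrow> cgraph (Gs ! i)"
    "\<And>i. i < length Gs \<Longrightarrow> long_rainbow_odd_cycle (Gs ! i) \<or> bad_piece (Gs ! i) \<or> (rainbow (Gs ! i) \<and> is_tree (Gs ! i))"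
    "\<And>i j. i < length Gs \<Longrightarrow> j < length Gs \<Longrightarrow> i \<noteq> j \<Longrightarrow> snd ` (Gs ! i) \<inter> snd ` (Gs ! j) = {}"
    "\<And>i j. i < length Gs \<Longrightarrow> j < length Gs \<Longrightarrow> i \<noteq> j \<Longrightarrow> card (verts (Gs ! i) \<inter> verts (Gs ! j)) \<le> 1"
    "\<And>i j. i < length Gs \<Longrightarrow> j < length Gs \<Longrightarrow> i \<noteq> j \<Longrightarrow> trp Gs i \<Longrightarrow> trp Gs j \<Longrightarrow> verts (Gs ! i) \<inter> verts (Gs ! j) = {}"
proof -
  show "cgraph F" using fr by (simp add: frankenstein_def)
  show "nre F" using fr by (simp add: frankenstein_def nre_def)
  show "\<And>i. i < length Gs \<Longrightarrow> Gs ! i \<subseteq> F" using fr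
    by (auto simp: frankenstein_def is_partition_def)
  show "\<And>i. i < length Gs \<Longrightarrow> cgraph (Gs ! i)" using fr
    by (auto simp: frankenstein_def is_partition_def)
  show "\<And>i. i < length Gs \<Longrightarrow> long_rainbow_odd_cycle (Gs ! i) \<or> bad_piece (Gs ! i) \<or> (rainbow (Gs ! i) \<and> is_tree (Gs ! i))"
    using fr by (auto simp: frankenstein_def)
  show "\<And>i j. i < length Gs \<Longrightarrow> j < length Gs \<Longrightarrow> i \<noteq> j \<Longrightarrow> snd ` (Gs ! i) \<inter> snd ` (Gs ! j) = {}"
    using fr by (auto simp: frankenstein_def is_partition_def colors_def)
  show "\<And>i j. i < length Gs \<Longrightarrow> j < length Gs \<Longrightarrow> i \<noteq> j \<Longrightarrow> card (verts (Gs ! i) \<inter> verts (Gs ! j)) \<le> 1"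
    using fr by (auto simp: frankenstein_def is_partition_def)
  show "\<And>i j. i < length Gs \<Longrightarrow> j < length Gs \<Longrightarrow> i \<noteq> j \<Longrightarrow> trp Gs i \<Longrightarrow> trp Gs j \<Longrightarrow> verts (Gs ! i) \<inter> verts (Gs ! j) = {}"
    using fr unfolding frankenstein_def trp_def by blast
qed

lemma Ug_sub: "frankenstein F Gs \<Longrightarrow> S \<subseteq> {..<length Gs} \<Longrightarrow> Ug Gs S \<subseteq> F"
  using fr_facts(3) unfolding Ug_def by blast

lemma Ug_insert: "Ug Gs (insert j S) = Gs ! j \<union> Ug Gs S"
  by (simp add: Ug_def)

lemma part_NT:
  assumes fr: "frankenstein F Gs" and i: "i < length Gs"
  shows "Inv F (NT Gs {i}) (Gs ! i)"
proof -
  have "Inv F (\<lambda>x. \<not> (rainbow (Gs ! i) \<and> is_tree (Gs ! i))) (Gs ! i)"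
    using part_Inv[OF fr_facts(2)[OF fr] fr_facts(1)[OF fr] fr_facts(3)[OF fr i] fr_facts(5)[OF fr i]] .
  then show ?thesis by (rule Inv_mono) (auto simp: NT_def trp_def)
qed

lemma main_card:
  assumes fr: "frankenstein F Gs" and cur: "cur \<subseteq> {..<length Gs}" and j: "j < length Gs" "j \<notin> cur"
    and I: "Inv F (NT Gs cur) (Ug Gs cur)"
  shows "card (verts (Gs ! j) \<inter> verts (Ug Gs cur)) \<le> 1"
proof (rule ccontr)
  assume "\<not> ?thesis"
  moreover have "finite (verts (Gs ! j) \<inter> verts (Ug Gs cur))"
    using verts_finite[OF fr_facts(4)[OF fr j(1)]] by simp
  ultimately obtain x y where xy: "x \<in> verts (Gs ! j) \<inter> verts (Ug Gs cur)" "y \<in> verts (Gs ! j) \<inter> verts (Ug Gs cur)" "x \<noteq> y"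
    using card_le_Suc0_iff_eq by (metis One_nat_def)
  have cg: "cgraph F" and nre: "nre F" using fr_facts[OF fr] by auto
  have UF: "Ug Gs cur \<subseteq> F" using Ug_sub[OF fr cur] .
  have QF: "Gs ! j \<subseteq> F" using fr_facts(3)[OF fr j(1)] .
  have cd: "snd ` Ug Gs cur \<inter> snd ` (Gs ! j) = {}"
  proof -
    have "\<forall>i\<in>cur. snd ` (Gs ! i) \<inter> snd ` (Gs ! j) = {}"
      using fr_facts(6)[OF fr] cur j by blast
    then show ?thesis unfolding Ug_def snd_UN by blast
  qed
  have IQ: "Inv F (NT Gs {j}) (Gs ! j)" using part_NT[OF fr j(1)] .
  show False
  proof (cases "trp Gs j")
    case False
    then have "\<forall>x \<in> verts (Gs ! j) \<inter> verts (Ug Gs cur). NT Gs {j} x" by (simp add: NT_def)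
    then show False using no_double1[OF nre cg UF QF I IQ cd _ xy] by blast
  next
    case True
    have "\<forall>x \<in> verts (Ug Gs cur) \<inter> verts (Gs ! j). NT Gs cur x"
    proof (intro ballI)
      fix z assume z: "z \<in> verts (Ug Gs cur) \<inter> verts (Gs ! j)"
      show "NT Gs cur z" unfolding NT_def
      proof (intro ballI impI)
        fix i assume i: "i \<in> cur" "trp Gs i"
        have "i \<noteq> j" "i < length Gs" using i j cur by auto
        then have "verts (Gs ! i) \<inter> verts (Gs ! j) = {}" using fr_facts(8)[OF fr _ j(1)] i True by blast
        then show "z \<notin> verts (Gs ! i)" using z by blast
      qed
    qed
    moreover have "snd ` (Gs ! j) \<inter> snd ` Ug Gs cur = {}" using cd by blast
    moreover have "x \<in> verts (Ug Gs cur) \<inter> verts (Gs ! j)" "y \<in> verts (Ug Gs cur) \<inter> verts (Gs ! j)"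
      using xy by auto
    ultimately show False using no_double1[OF nre cg QF UF IQ I _ _ _ _ xy(3)] by blast
  qed
qed


lemma state0: "state F Gs 0"
  unfolding state_def
  by (rule exI[of _ "[]"], rule exI[of _ "{}"]) (simp add: goodl_def Ug_def Inv_empty verts_def)

lemma UN_prefix: "(\<Union>l<length js. Gs ! (js ! l)) = Ug Gs (set js)"
proof -
  have "set js = (\<lambda>l. js ! l) ` {..<length js}" by (auto simp: set_conv_nth)
  then show ?thesis unfolding Ug_def by simp
qed

lemma goodl_snoc:
  assumes g: "goodl Gs js" and c: "card (verts (Ug Gs (set js)) \<inter> verts (Gs ! j)) \<le> 1"
  shows "goodl Gs (js @ [j])"
  unfolding goodl_def
proof (intro allI impI)
  fix i assume i: "1 \<le> i \<and> i < length (js @ [j])"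
  show "card (verts (\<Union>l<i. Gs ! ((js @ [j]) ! l)) \<inter> verts (Gs ! ((js @ [j]) ! i))) \<le> 1"
  proof (cases "i < length js")
    case True
    have "(\<Union>l<i. Gs ! ((js @ [j]) ! l)) = (\<Union>l<i. Gs ! (js ! l))"
      using True by (intro SUP_cong) (auto simp: nth_append)
    moreover have "(js @ [j]) ! i = js ! i" using True by (simp add: nth_append)
    ultimately show ?thesis using g i True unfolding goodl_def by simp
  next
    case False
    then have ii: "i = length js" using i by simp
    have "(\<Union>l<i. Gs ! ((js @ [j]) ! l)) = (\<Union>l<length js. Gs ! (js ! l))"
      using ii by (intro SUP_cong) (auto simp: nth_append)
    then show ?thesis using c ii UN_prefix[of Gs js] by simp
  qed
qed

lemma state_step:
  assumes fr: "frankenstein F Gs" and k: "k < length Gs" and st: "state F Gs k"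
  shows "state F Gs (Suc k)"
proof -
  let ?n = "length Gs"
  obtain js cur where S: "length js = k" "distinct js" "set js \<subseteq> {..<?n}" "cur \<subseteq> set js"
    "goodl Gs js" "\<forall>j<?n. j \<notin> set js \<longrightarrow> verts (Gs ! j) \<inter> verts (Ug Gs (set js - cur)) = {}"
    "Inv F (NT Gs cur) (Ug Gs cur)"
    using st unfolding state_def by blast
  have cg: "cgraph F" using fr_facts(1)[OF fr] .
  have curn: "cur \<subseteq> {..<?n}" using S(3,4) by blast
  have "\<not> {..<?n} \<subseteq> set js"
  proof
    assume "{..<?n} \<subseteq> set js"
    then have "card {..<?n} \<le> card (set js)" by (intro card_mono) auto
    then show False using S(1,2) k by (simp add: distinct_card)
  qed
  then obtain j0 where j0: "j0 < ?n" "j0 \<notin> set js" by auto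
  have UD: "Ug Gs (set js) = Ug Gs cur \<union> Ug Gs (set js - cur)" using S(4) unfolding Ug_def by blast
  have vD: "verts (Ug Gs (set js)) = verts (Ug Gs cur) \<union> verts (Ug Gs (set js - cur))"
    using UD by (simp add: verts_Un)
  show ?thesis
  proof (cases "\<exists>j<?n. j \<notin> set js \<and> verts (Gs ! j) \<inter> verts (Ug Gs cur) \<noteq> {}")
    case True
    then obtain j where j: "j < ?n" "j \<notin> set js" "verts (Gs ! j) \<inter> verts (Ug Gs cur) \<noteq> {}" by blast
    have jc: "j \<notin> cur" using j S(4) by blast
    have c1: "card (verts (Gs ! j) \<inter> verts (Ug Gs cur)) \<le> 1" using main_card[OF fr curn j(1) jc S(7)] .
    have fin: "finite (verts (Gs ! j) \<inter> verts (Ug Gs cur))"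
      using verts_finite[OF fr_facts(4)[OF fr j(1)]] by simp
    have "card (verts (Gs ! j) \<inter> verts (Ug Gs cur)) = 1"
      using c1 j(3) fin by (metis One_nat_def card_0_eq le_Suc_eq le_zero_eq)
    then obtain a where a: "verts (Gs ! j) \<inter> verts (Ug Gs cur) = {a}" by (metis card_1_singletonE)
    have old: "verts (Gs ! j) \<inter> verts (Ug Gs (set js - cur)) = {}" using S(6) j by blast
    have eqc: "verts (Ug Gs (set js)) \<inter> verts (Gs ! j) = verts (Gs ! j) \<inter> verts (Ug Gs cur)"
      using vD old by blast
    have g: "goodl Gs (js @ [j])" using goodl_snoc[OF S(5)] c1 eqc by simp
    have a': "verts (Ug Gs cur) \<inter> verts (Gs ! j) = {a}" using a by blast
    have cd: "snd ` Ug Gs cur \<inter> snd ` (Gs ! j) = {}"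
    proof -
      have "\<forall>i\<in>cur. snd ` (Gs ! i) \<inter> snd ` (Gs ! j) = {}"
        using fr_facts(6)[OF fr] curn j jc by blast
      then show ?thesis unfolding Ug_def snd_UN by blast
    qed
    have IG: "Inv F (\<lambda>x. NT Gs cur x \<and> NT Gs {j} x) (Ug Gs cur \<union> Gs ! j)"
      using Inv_glue[OF cg Ug_sub[OF fr curn] fr_facts(3)[OF fr j(1)] S(7) part_NT[OF fr j(1)] a' cd] .
    have "Ug Gs (insert j cur) = Ug Gs cur \<union> Gs ! j" by (auto simp: Ug_insert)
    moreover have "NT Gs (insert j cur) x \<Longrightarrow> NT Gs cur x \<and> NT Gs {j} x" for x by (simp add: NT_def)
    ultimately have I': "Inv F (NT Gs (insert j cur)) (Ug Gs (insert j cur))"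
      using IG by (auto intro: Inv_mono)
    have ds: "set (js @ [j]) - insert j cur = set js - cur" using j(2) by auto
    show ?thesis unfolding state_def
    proof (intro exI[of _ "js @ [j]"] exI[of _ "insert j cur"] conjI)
      show "length (js @ [j]) = Suc k" using S(1) by simp
      show "distinct (js @ [j])" using S(2) j(2) by simp
      show "set (js @ [j]) \<subseteq> {..<?n}" using S(3) j(1) by auto
      show "insert j cur \<subseteq> set (js @ [j])" using S(4) by auto
      show "goodl Gs (js @ [j])" by (rule g)
      show "\<forall>j'<?n. j' \<notin> set (js @ [j]) \<longrightarrow> verts (Gs ! j') \<inter> verts (Ug Gs (set (js @ [j]) - insert j cur)) = {}"
        unfolding ds using S(6) by auto
      show "Inv F (NT Gs (insert j cur)) (Ug Gs (insert j cur))" by (rule I')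
    qed
  next
    case False
    then have dis: "\<forall>j<?n. j \<notin> set js \<longrightarrow> verts (Gs ! j) \<inter> verts (Ug Gs cur) = {}" by blast
    have z: "verts (Ug Gs (set js)) \<inter> verts (Gs ! j0) = {}" using vD dis S(6) j0 by blast
    have g: "goodl Gs (js @ [j0])" using goodl_snoc[OF S(5)] z by simp
    have ds: "set (js @ [j0]) - {j0} = set js" using j0(2) by auto
    have I': "Inv F (NT Gs {j0}) (Ug Gs {j0})" using part_NT[OF fr j0(1)] by (simp add: Ug_def)
    show ?thesis unfolding state_def
    proof (intro exI[of _ "js @ [j0]"] exI[of _ "{j0}"] conjI)
      show "length (js @ [j0]) = Suc k" using S(1) by simp
      show "distinct (js @ [j0])" using S(2) j0(2) by simp
      show "set (js @ [j0]) \<subseteq> {..<?n}" using S(3) j0(1) by auto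
      show "{j0} \<subseteq> set (js @ [j0])" by auto
      show "goodl Gs (js @ [j0])" by (rule g)
      show "\<forall>j'<?n. j' \<notin> set (js @ [j0]) \<longrightarrow> verts (Gs ! j') \<inter> verts (Ug Gs (set (js @ [j0]) - {j0})) = {}"
        unfolding ds using dis S(6) vD by auto
      show "Inv F (NT Gs {j0}) (Ug Gs {j0})" by (rule I')
    qed
  qed
qed

lemma state_all: "frankenstein F Gs \<Longrightarrow> k \<le> length Gs \<Longrightarrow> state F Gs k"
proof (induction k)
  case 0 show ?case by (rule state0)
next
  case (Suc k) then show ?case using state_step[of F Gs k] by simp
qed

theorem theorem2p4:
  fixes F :: "('v, 'c) cgraph" and Gs :: "('v, 'c) cgraph list"
  assumes "frankenstein F Gs"
  shows "\<exists>\<sigma>. bij_betw \<sigma> {0..<length Gs} {0..<length Gs} \<and>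
    (\<forall>i. 1 \<le> i \<and> i < length Gs \<longrightarrow>
       card (verts (\<Union>j<i. Gs ! \<sigma> j) \<inter> verts (Gs ! \<sigma> i)) \<le> 1)"
proof -
  let ?n = "length Gs"
  obtain js cur where S: "length js = ?n" "distinct js" "set js \<subseteq> {..<?n}" "goodl Gs js"
    using state_all[OF assms order_refl] unfolding state_def by blast
  have "card (set js) = ?n" using S(1,2) by (simp add: distinct_card)
  then have sj: "set js = {..<?n}" using S(3) by (intro card_seteq) auto
  have "bij_betw ((!) js) {..<length js} (set js)" by (rule bij_betw_nth[OF S(2)]) auto
  then have b: "bij_betw ((!) js) {0..<?n} {0..<?n}" using sj S(1) by (simp add: atLeast0LessThan)
  have "\<forall>i. 1 \<le> i \<and> i < ?n \<longrightarrow> card (verts (\<Union>j<i. Gs ! (js ! j)) \<inter> verts (Gs ! (js ! i))) \<le> 1"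
    using S(4) S(1) unfolding goodl_def by simp
  then show ?thesis using b by blast
qed

end
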